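(* Let $G$ be as in the context and assume $G\in\mathcal{RH}_\infty$. Let $K$ be a proper real rational transfer matrix (mapping $y$ to $u$). Then $K$ is a retrofit controller if and only if there exists $Q\in\mathcal{RH}_\infty$ such that $$K=(I+QG_{yu})^{-1}Q \qquad\text{and}\qquad G_{wu}\,Q\,G_{yv}=0 .$$ (Here $Q$ is the Youla parameter of $K$, namely $Q=K(I-G_{yu}K)^{-1}$.)
   Context: A subsystem is a proper real rational transfer matrix $G$ with inputs $(v,d,u)$ (interaction input, disturbance input, control input) and outputs $(w,z,y)$ (interaction output, evaluation output, measurement output): $$\begin{bmatrix} w\\ z\\ y\end{bmatrix}=\begin{bmatrix} G_{wv}&G_{wd}&G_{wu}\\ G_{zv}&G_{zd}&G_{zu}\\ G_{yv}&G_{yd}&G_{yu}\end{bmatrix}\begin{bmatrix} v\\ d\\ u\end{bmatrix}.$$ An environment is a proper real rational transfer matrix $\overline{G}$ closing the interaction loop by $v=\overline{G}w$; a (sub)controller is a proper real rational $K$ closing $u=Ky$. $\mathcal{RH}_\infty$ is the set of stable, proper, real rational transfer matrices. All feedback interconnections are assumed well-posed, and internal stability is meant in the standard sense (all closed-loop maps from signals injected at every interconnection point to all interconnection signals belong to $\mathcal{RH}_\infty$). For transfer matrices $H$ and $C$, the positive feedback system $y=Hu$, $u=Cy$ is denoted $\mathcal F(H,C)$, and $C$ is called a stabilizing controller for $H$ if $\mathcal F(H,C)$ is internally stable. The preexisting system is $G_{\rm pre}:=\mathcal F(\overline{G},G_{wv})$, i.e. the loop $w=G_{wv}v$, $v=\overline{G}w$.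 The set of admissible environments is $\overline{\mathcal G}:=\{\overline{G}: G_{\rm pre}\text{ is internally stable}\}$. A controller $u=Ky$ is a retrofit controller if the entire feedback system formed by $G$, $u=Ky$ and $v=\overline{G}w$ is internally stable for every $\overline{G}\in\overline{\mathcal G}$. *)

theory Defs
  imports "HOL-Computational_Algebra.Polynomial" "HOL-Computational_Algebra.Fraction_Field"
    "Jordan_Normal_Form.Gauss_Jordan_Elimination"
begin

text \<open>Real rational transfer functions: the field of fractions of real polynomials.
  Transfer matrices are matrices over this field.\<close>
type_synonym rfun = "real poly fract"
type_synonym tfm = "rfun mat"

definition proper_rf :: "rfun \<Rightarrow> bool" where
  "proper_rf r \<longleftrightarrow> (\<exists>p q. q \<noteq> 0 \<and> r = Fract p q \<and> degree p \<le> degree q)"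

definition stable_rf :: "rfun \<Rightarrow> bool" where
  "stable_rf r \<longleftrightarrow> (\<exists>p q. q \<noteq> 0 \<and> r = Fract p q \<and> degree p \<le> degree q \<and>
      (\<forall>z::complex. poly (map_poly complex_of_real q) z = 0 \<longrightarrow> Re z < 0))"

definition proper_tfm :: "tfm \<Rightarrow> bool" where
  "proper_tfm M \<longleftrightarrow> (\<forall>i<dim_row M. \<forall>j<dim_col M. proper_rf (M $$ (i,j)))"

definition RHinf :: "tfm \<Rightarrow> bool" where
  "RHinf M \<longleftrightarrow> (\<forall>i<dim_row M. \<forall>j<dim_col M. stable_rf (M $$ (i,j)))"

text \<open>Internal stability of the positive feedback system F(H,C): y = H u + e1, u = C y + e2.
  The map (e1,e2) to (y,u) is the inverse of [[I,-H],[-C,I]]; internal stability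
  means this matrix is invertible over the rational functions and its inverse is in RH-infinity
  (this includes well-posedness).\<close>
definition int_stable :: "tfm \<Rightarrow> tfm \<Rightarrow> bool" where
  "int_stable H C \<longleftrightarrow>
     dim_row C = dim_col H \<and> dim_col C = dim_row H \<and>
     (let M = four_block_mat (1\<^sub>m (dim_row H)) (- H) (- C) (1\<^sub>m (dim_col H)) in
       \<exists>B. inverts_mat M B \<and> inverts_mat B M \<and> RHinf B)"

definition blk3 :: "tfm \<Rightarrow> tfm \<Rightarrow> tfm \<Rightarrow> tfm \<Rightarrow> tfm \<Rightarrow> tfm \<Rightarrow> tfm \<Rightarrow> tfm \<Rightarrow> tfm \<Rightarrow> tfm" where
  "blk3 A11 A12 A13 A21 A22 A23 A31 A32 A33 =
     four_block_mat (four_block_mat A11 A12 A21 A22)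
       (four_block_mat A13 (0\<^sub>m (dim_row A13) 0) A23 (0\<^sub>m (dim_row A23) 0))
       (four_block_mat A31 A32 (0\<^sub>m 0 (dim_col A31)) (0\<^sub>m 0 (dim_col A32))) A33"

end

theory Submission imports Defs "Jordan_Normal_Form.Determinant" begin


lemma mp_mult: "map_poly complex_of_real (p*q) = map_poly complex_of_real p * map_poly complex_of_real q"
  by (simp add: poly_eq_iff coeff_mult coeff_map_poly)
lemma mp_eval: "poly (map_poly complex_of_real q) (of_real x) = of_real (poly q x)"
  by (induction q) (auto simp: map_poly_pCons)

definition hurw :: "real poly \<Rightarrow> bool" where
  "hurw q \<longleftrightarrow> (\<forall>z. poly (map_poly complex_of_real q) z = 0 \<longrightarrow> Re z < 0)"

lemma hurw_nz: "hurw q \<Longrightarrow> q \<noteq> 0"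
  unfolding hurw_def by (metis map_poly_0 poly_0 zero_complex.simps(1) less_irrefl)

lemma hurw_mult: "hurw p \<Longrightarrow> hurw q \<Longrightarrow> hurw (p*q)"
  unfolding hurw_def by (simp add: mp_mult)

lemma hurw_1: "hurw 1"
  unfolding hurw_def by simp

lemma hurw_s1: "hurw [:1,1:]"
  unfolding hurw_def
proof (intro allI impI)
  fix z :: complex assume "poly (map_poly complex_of_real [:1,1:]) z = 0"
  hence "1 + z = 0" by (simp add: map_poly_pCons)
  hence "z = -1" by (simp add: add_eq_0_iff)
  thus "Re z < 0" by simp
qed

lemma hurw_eval: "hurw q \<Longrightarrow> s \<ge> 0 \<Longrightarrow> poly q s \<noteq> 0"
  unfolding hurw_def using mp_eval[of q s] by (metis Re_complex_of_real not_le of_real_0)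

lemma stable_iff: "stable_rf r \<longleftrightarrow> (\<exists>p q. hurw q \<and> r = Fract p q \<and> degree p \<le> degree q)"
  unfolding stable_rf_def hurw_def using hurw_nz[unfolded hurw_def] by blast

lemma stable_0: "stable_rf 0"
  unfolding stable_iff by (intro exI[of _ 0] exI[of _ 1]) (auto simp: hurw_1 Zero_fract_def)

lemma stable_1: "stable_rf 1"
  unfolding stable_iff by (intro exI[of _ 1] exI[of _ 1]) (auto simp: hurw_1 One_fract_def)

lemma stable_add: assumes "stable_rf a" "stable_rf b" shows "stable_rf (a+b)"
proof -
  from assms obtain p1 q1 p2 q2 where a: "hurw q1" "a = Fract p1 q1" "degree p1 \<le> degree q1"
    and b: "hurw q2" "b = Fract p2 q2" "degree p2 \<le> degree q2" unfolding stable_iff by blast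
  have nz: "q1 \<noteq> 0" "q2 \<noteq> 0" using a b hurw_nz by auto
  have "a + b = Fract (p1*q2 + p2*q1) (q1*q2)" using a b nz by simp
  moreover have "degree (p1*q2 + p2*q1) \<le> degree (q1*q2)"
  proof -
    have "degree (p1*q2) \<le> degree q1 + degree q2" using degree_mult_le[of p1 q2] a by linarith
    moreover have "degree (p2*q1) \<le> degree q1 + degree q2" using degree_mult_le[of p2 q1] b by linarith
    ultimately show ?thesis using degree_add_le degree_mult_eq[OF nz] by metis
  qed
  ultimately show ?thesis unfolding stable_iff using hurw_mult[OF a(1) b(1)]
    by (intro exI[of _ "p1*q2 + p2*q1"] exI[of _ "q1*q2"]) simp
qed

lemma stable_mult: assumes "stable_rf a" "stable_rf b" shows "stable_rf (a*b)"
proof -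
  from assms obtain p1 q1 p2 q2 where a: "hurw q1" "a = Fract p1 q1" "degree p1 \<le> degree q1"
    and b: "hurw q2" "b = Fract p2 q2" "degree p2 \<le> degree q2" unfolding stable_iff by blast
  have nz: "q1 \<noteq> 0" "q2 \<noteq> 0" using a b hurw_nz by auto
  have "a * b = Fract (p1*p2) (q1*q2)" using a b nz by simp
  moreover have "degree (p1*p2) \<le> degree (q1*q2)"
    using degree_mult_le[of p1 p2] a b degree_mult_eq[OF nz] by linarith
  ultimately show ?thesis unfolding stable_iff using hurw_mult[OF a(1) b(1)]
    by (intro exI[of _ "p1*p2"] exI[of _ "q1*q2"]) simp
qed

lemma stable_uminus: assumes "stable_rf a" shows "stable_rf (-a)"
proof -
  from assms obtain p1 q1 where a: "hurw q1" "a = Fract p1 q1" "degree p1 \<le> degree q1"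
    unfolding stable_iff by blast
  have "-a = Fract (-p1) q1" using a(2) by simp
  moreover have "degree (-p1) \<le> degree q1" using a(3) by simp
  ultimately show ?thesis unfolding stable_iff using a(1) by blast
qed

lemma stable_diff: assumes "stable_rf a" "stable_rf b" shows "stable_rf (a-b)"
proof -
  have "a - b = a + (-b)" by simp
  then show ?thesis using stable_add[OF assms(1) stable_uminus[OF assms(2)]] by simp
qed

lemma stable_sum: "(\<And>x. x \<in> S \<Longrightarrow> stable_rf (f x)) \<Longrightarrow> stable_rf (sum f S)"
proof (induction S rule: infinite_finite_induct)
  case (infinite A) then show ?case using stable_0 by simp
next
  case empty then show ?case using stable_0 by simp
next
  case (insert x F)
  then show ?case using stable_add[of "f x" "sum f F"] by simp
qed

lemma stable_const: "stable_rf (Fract [:c:] 1)"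
  unfolding stable_iff using hurw_1 by (intro exI[of _ "[:c:]"] exI[of _ 1]) simp

lemma mult_entry: "A \<in> carrier_mat n k \<Longrightarrow> B \<in> carrier_mat k m \<Longrightarrow> i < n \<Longrightarrow> j < m \<Longrightarrow>
   (A * B) $$ (i,j) = (\<Sum>l<k. A $$ (i,l) * B $$ (l,j))"
  by (simp add: scalar_prod_def atLeast0LessThan)

lemma RHinf_mult: assumes "A \<in> carrier_mat n k" "B \<in> carrier_mat k m" "RHinf A" "RHinf B"
  shows "RHinf (A*B)"
  unfolding RHinf_def
proof (intro allI impI)
  fix i j assume "i < dim_row (A*B)" "j < dim_col (A*B)"
  then have ij: "i < n" "j < m" using assms by auto
  have "stable_rf (\<Sum>l<k. A $$ (i,l) * B $$ (l,j))"
    by (rule stable_sum, rule stable_mult) (use assms ij in \<open>auto simp: RHinf_def\<close>)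
  then show "stable_rf ((A*B) $$ (i,j))" using mult_entry[OF assms(1,2) ij] by simp
qed

lemma RHinf_add: assumes "A \<in> carrier_mat n m" "B \<in> carrier_mat n m" "RHinf A" "RHinf B"
  shows "RHinf (A+B)"
  using assms by (auto simp: RHinf_def intro!: stable_add)

lemma RHinf_uminus: assumes "RHinf A" shows "RHinf (-A)"
  using assms by (auto simp: RHinf_def intro!: stable_uminus)

lemma RHinf_one: "RHinf (1\<^sub>m n)"
  by (auto simp: RHinf_def stable_0 stable_1)

lemma RHinf_zero: "RHinf (0\<^sub>m n m)"
  by (auto simp: RHinf_def stable_0)



definition sb :: "'a mat \<Rightarrow> nat \<Rightarrow> nat \<Rightarrow> nat \<Rightarrow> nat \<Rightarrow> 'a mat" where
  "sb A r0 nr c0 nc = mat nr nc (\<lambda>(i,j). A $$ (i + r0, j + c0))"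

lemma sb_carrier[simp]: "sb A r0 nr c0 nc \<in> carrier_mat nr nc"
  and sb_dim[simp]: "dim_row (sb A r0 nr c0 nc) = nr" "dim_col (sb A r0 nr c0 nc) = nc"
  by (auto simp: sb_def)

lemma sb_index[simp]: "i < nr \<Longrightarrow> j < nc \<Longrightarrow> sb A r0 nr c0 nc $$ (i,j) = A $$ (i+r0, j+c0)"
  by (simp add: sb_def)

lemma sum_split_lt: "(\<Sum>l<(a::nat)+b. f l) = (\<Sum>l<a. f l) + (\<Sum>l<b. f (a + l))"
  by (induction b) (auto simp: add_ac)

lemma sb_add: "A \<in> carrier_mat m n \<Longrightarrow> B \<in> carrier_mat m n \<Longrightarrow> r0+nr \<le> m \<Longrightarrow> c0+nc \<le> n \<Longrightarrow>
  sb (A+B) r0 nr c0 nc = sb A r0 nr c0 nc + sb B r0 nr c0 nc"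
  by (intro eq_matI) auto

lemma sb_uminus: "A \<in> carrier_mat m n \<Longrightarrow> r0+nr \<le> m \<Longrightarrow> c0+nc \<le> n \<Longrightarrow>
  sb (-A) r0 nr c0 nc = - sb A r0 nr c0 nc"
  by (intro eq_matI) auto

lemma sb_zero: "r0+nr \<le> m \<Longrightarrow> c0+nc \<le> n \<Longrightarrow> sb (0\<^sub>m m n) r0 nr c0 nc = 0\<^sub>m nr nc"
  by (intro eq_matI) auto

lemma sb_mult2: assumes A: "A \<in> carrier_mat m (k1+k2)" and B: "B \<in> carrier_mat (k1+k2) n"
  and r: "r0+nr \<le> m" and c: "c0+nc \<le> n"
  shows "sb (A*B) r0 nr c0 nc = sb A r0 nr 0 k1 * sb B 0 k1 c0 nc + sb A r0 nr k1 k2 * sb B k1 k2 c0 nc" (is "_ = ?RHS")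
proof -
  have H: "sb (A*B) r0 nr c0 nc $$ (i,j) = ?RHS $$ (i,j)" if ij: "i < nr" "j < nc" for i j
  proof -
  have "sb (A*B) r0 nr c0 nc $$ (i,j) = (\<Sum>l<k1+k2. A $$ (i+r0,l) * B $$ (l,j+c0))"
    using ij r c by (simp add: mult_entry[OF A B])
  also have "\<dots> = (\<Sum>l<k1. A $$ (i+r0,l) * B $$ (l,j+c0)) + (\<Sum>l<k2. A $$ (i+r0,k1+l) * B $$ (k1+l,j+c0))"
    by (rule sum_split_lt)
  also have "\<dots> = (sb A r0 nr 0 k1 * sb B 0 k1 c0 nc + sb A r0 nr k1 k2 * sb B k1 k2 c0 nc) $$ (i,j)"
    using ij by (simp add: scalar_prod_def atLeast0LessThan add_ac)
  finally show ?thesis .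
  qed
  show ?thesis
  proof (rule eq_matI)
    fix i j assume "i < dim_row ?RHS" "j < dim_col ?RHS"
    then show "sb (A*B) r0 nr c0 nc $$ (i,j) = ?RHS $$ (i,j)" by (intro H) auto
  qed auto
qed

lemma sb_mult3: assumes A: "A \<in> carrier_mat m (k1+k2+k3)" and B: "B \<in> carrier_mat (k1+k2+k3) n"
  and r: "r0+nr \<le> m" and c: "c0+nc \<le> n"
  shows "sb (A*B) r0 nr c0 nc = sb A r0 nr 0 k1 * sb B 0 k1 c0 nc + sb A r0 nr k1 k2 * sb B k1 k2 c0 nc
     + sb A r0 nr (k1+k2) k3 * sb B (k1+k2) k3 c0 nc" (is "_ = ?RHS")
proof -
  have H: "sb (A*B) r0 nr c0 nc $$ (i,j) = ?RHS $$ (i,j)" if ij: "i < nr" "j < nc" for i j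
  proof -
  have "sb (A*B) r0 nr c0 nc $$ (i,j) = (\<Sum>l<k1+k2+k3. A $$ (i+r0,l) * B $$ (l,j+c0))"
    using ij r c by (simp add: mult_entry[OF A B])
  also have "\<dots> = (\<Sum>l<k1. A $$ (i+r0,l) * B $$ (l,j+c0)) + (\<Sum>l<k2. A $$ (i+r0,k1+l) * B $$ (k1+l,j+c0))
      + (\<Sum>l<k3. A $$ (i+r0,k1+k2+l) * B $$ (k1+k2+l,j+c0))"
    by (simp add: sum_split_lt add_ac)
  also have "\<dots> = (sb A r0 nr 0 k1 * sb B 0 k1 c0 nc + sb A r0 nr k1 k2 * sb B k1 k2 c0 nc
     + sb A r0 nr (k1+k2) k3 * sb B (k1+k2) k3 c0 nc) $$ (i,j)"
    using ij by (simp add: scalar_prod_def atLeast0LessThan add_ac)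
  finally show ?thesis .
  qed
  show ?thesis
  proof (rule eq_matI)
    fix i j assume "i < dim_row ?RHS" "j < dim_col ?RHS"
    then show "sb (A*B) r0 nr c0 nc $$ (i,j) = ?RHS $$ (i,j)" by (intro H) auto
  qed auto
qed

lemma sb_four_block: assumes "A \<in> carrier_mat r1 c1" "B \<in> carrier_mat r1 c2" "C \<in> carrier_mat r2 c1" "D \<in> carrier_mat r2 c2"
  shows "sb (four_block_mat A B C D) 0 r1 0 c1 = A" "sb (four_block_mat A B C D) 0 r1 c1 c2 = B"
    "sb (four_block_mat A B C D) r1 r2 0 c1 = C" "sb (four_block_mat A B C D) r1 r2 c1 c2 = D"
  using assms by (auto intro!: eq_matI)

lemma mat_eq_sb2: assumes "A \<in> carrier_mat (r1+r2) (c1+c2)" "B \<in> carrier_mat (r1+r2) (c1+c2)"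
  "sb A 0 r1 0 c1 = sb B 0 r1 0 c1" "sb A 0 r1 c1 c2 = sb B 0 r1 c1 c2"
  "sb A r1 r2 0 c1 = sb B r1 r2 0 c1" "sb A r1 r2 c1 c2 = sb B r1 r2 c1 c2"
  shows "A = B"
proof (rule eq_matI)
  fix i j assume ij: "i < dim_row B" "j < dim_col B"
  show "A $$ (i,j) = B $$ (i,j)"
  proof (cases "i < r1"; cases "j < c1")
    assume "i < r1" "j < c1" thus ?thesis using arg_cong[OF assms(3), of "\<lambda>M. M $$ (i,j)"] by simp
  next
    assume "i < r1" "\<not> j < c1" thus ?thesis using arg_cong[OF assms(4), of "\<lambda>M. M $$ (i,j-c1)"] ij assms(2) by simp
  next
    assume "\<not> i < r1" "j < c1" thus ?thesis using arg_cong[OF assms(5), of "\<lambda>M. M $$ (i-r1,j)"] ij assms(2) by simp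
  next
    assume "\<not> i < r1" "\<not> j < c1" thus ?thesis using arg_cong[OF assms(6), of "\<lambda>M. M $$ (i-r1,j-c1)"] ij assms(2) by simp
  qed
qed (use assms in auto)

lemma RHinf_sb: "RHinf A \<Longrightarrow> A \<in> carrier_mat m n \<Longrightarrow> r0+nr \<le> m \<Longrightarrow> c0+nc \<le> n \<Longrightarrow> RHinf (sb A r0 nr c0 nc)"
  by (auto simp: RHinf_def)

lemma RHinf_four_block: assumes "A \<in> carrier_mat r1 c1" "B \<in> carrier_mat r1 c2" "C \<in> carrier_mat r2 c1" "D \<in> carrier_mat r2 c2"
  "RHinf A" "RHinf B" "RHinf C" "RHinf D"
  shows "RHinf (four_block_mat A B C D)"
  using assms unfolding RHinf_def by auto



lemma blk3_carrier: assumes c: "A11 \<in> carrier_mat r1 c1" "A12 \<in> carrier_mat r1 c2" "A13 \<in> carrier_mat r1 c3"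
    "A21 \<in> carrier_mat r2 c1" "A22 \<in> carrier_mat r2 c2" "A23 \<in> carrier_mat r2 c3"
    "A31 \<in> carrier_mat r3 c1" "A32 \<in> carrier_mat r3 c2" "A33 \<in> carrier_mat r3 c3"
  shows "blk3 A11 A12 A13 A21 A22 A23 A31 A32 A33 \<in> carrier_mat (r1+r2+r3) (c1+c2+c3)"
  using c unfolding blk3_def by auto

lemma blk3_index: assumes c: "A11 \<in> carrier_mat r1 c1" "A12 \<in> carrier_mat r1 c2" "A13 \<in> carrier_mat r1 c3"
    "A21 \<in> carrier_mat r2 c1" "A22 \<in> carrier_mat r2 c2" "A23 \<in> carrier_mat r2 c3"
    "A31 \<in> carrier_mat r3 c1" "A32 \<in> carrier_mat r3 c2" "A33 \<in> carrier_mat r3 c3"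
  and ij: "i < r1+r2+r3" "j < c1+c2+c3"
  shows "blk3 A11 A12 A13 A21 A22 A23 A31 A32 A33 $$ (i,j) =
  (if i < r1 then (if j < c1 then A11 $$ (i,j) else if j < c1+c2 then A12 $$ (i,j-c1) else A13 $$ (i,j-c1-c2))
   else if i < r1+r2 then (if j < c1 then A21 $$ (i-r1,j) else if j < c1+c2 then A22 $$ (i-r1,j-c1) else A23 $$ (i-r1,j-c1-c2))
   else (if j < c1 then A31 $$ (i-r1-r2,j) else if j < c1+c2 then A32 $$ (i-r1-r2,j-c1) else A33 $$ (i-r1-r2,j-c1-c2)))"
  using c ij unfolding blk3_def by (auto simp: diff_diff_add)

lemma sb_blk3: assumes c: "A11 \<in> carrier_mat r1 c1" "A12 \<in> carrier_mat r1 c2" "A13 \<in> carrier_mat r1 c3"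
    "A21 \<in> carrier_mat r2 c1" "A22 \<in> carrier_mat r2 c2" "A23 \<in> carrier_mat r2 c3"
    "A31 \<in> carrier_mat r3 c1" "A32 \<in> carrier_mat r3 c2" "A33 \<in> carrier_mat r3 c3"
  shows "sb (blk3 A11 A12 A13 A21 A22 A23 A31 A32 A33) 0 r1 0 c1 = A11"
    "sb (blk3 A11 A12 A13 A21 A22 A23 A31 A32 A33) 0 r1 c1 c2 = A12"
    "sb (blk3 A11 A12 A13 A21 A22 A23 A31 A32 A33) 0 r1 (c1+c2) c3 = A13"
    "sb (blk3 A11 A12 A13 A21 A22 A23 A31 A32 A33) r1 r2 0 c1 = A21"
    "sb (blk3 A11 A12 A13 A21 A22 A23 A31 A32 A33) r1 r2 c1 c2 = A22"
    "sb (blk3 A11 A12 A13 A21 A22 A23 A31 A32 A33) r1 r2 (c1+c2) c3 = A23"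
    "sb (blk3 A11 A12 A13 A21 A22 A23 A31 A32 A33) (r1+r2) r3 0 c1 = A31"
    "sb (blk3 A11 A12 A13 A21 A22 A23 A31 A32 A33) (r1+r2) r3 c1 c2 = A32"
    "sb (blk3 A11 A12 A13 A21 A22 A23 A31 A32 A33) (r1+r2) r3 (c1+c2) c3 = A33"
  using c by (auto intro!: eq_matI simp: blk3_index[OF c])

lemma mat_eq_sb3: assumes "A \<in> carrier_mat (r1+r2+r3) (c1+c2+c3)" "B \<in> carrier_mat (r1+r2+r3) (c1+c2+c3)"
  and "\<And>ra na cb nb. (ra,na) \<in> {(0,r1),(r1,r2),(r1+r2,r3)} \<Longrightarrow> (cb,nb) \<in> {(0,c1),(c1,c2),(c1+c2,c3)} \<Longrightarrow>
      sb A ra na cb nb = sb B ra na cb nb"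
  shows "A = B"
proof (rule eq_matI)
  fix i j assume ij: "i < dim_row B" "j < dim_col B"
  then have ij: "i < r1+r2+r3" "j < c1+c2+c3" using assms by auto
  have seg: "\<exists>ra na. (ra,na) \<in> {(0,a1),(a1,a2),(a1+a2,a3)} \<and> ra \<le> x \<and> x < ra + na"
    if "x < a1+a2+a3" for x a1 a2 a3 :: nat
  proof (cases "x < a1")
    case True thus ?thesis by (intro exI[of _ 0] exI[of _ a1]) simp
  next
    case False show ?thesis
    proof (cases "x < a1+a2")
      case True with False show ?thesis by (intro exI[of _ a1] exI[of _ a2]) simp
    next
      case F2: False with that show ?thesis by (intro exI[of _ "a1+a2"] exI[of _ a3]) simp
    qed
  qed
  obtain ra na where ra: "(ra,na) \<in> {(0,r1),(r1,r2),(r1+r2,r3)}" "ra \<le> i" "i < ra + na"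
    using seg[OF ij(1)] by blast
  obtain cb nb where cb: "(cb,nb) \<in> {(0,c1),(c1,c2),(c1+c2,c3)}" "cb \<le> j" "j < cb + nb"
    using seg[OF ij(2)] by blast
  have "sb A ra na cb nb $$ (i-ra, j-cb) = sb B ra na cb nb $$ (i-ra, j-cb)" using assms(3)[OF ra(1) cb(1)] by simp
  then show "A $$ (i,j) = B $$ (i,j)" using ra cb by simp
qed (use assms in auto)

lemma RHinf_blk3: assumes c: "A11 \<in> carrier_mat r1 c1" "A12 \<in> carrier_mat r1 c2" "A13 \<in> carrier_mat r1 c3"
    "A21 \<in> carrier_mat r2 c1" "A22 \<in> carrier_mat r2 c2" "A23 \<in> carrier_mat r2 c3"
    "A31 \<in> carrier_mat r3 c1" "A32 \<in> carrier_mat r3 c2" "A33 \<in> carrier_mat r3 c3"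
  and s: "RHinf A11" "RHinf A12" "RHinf A13" "RHinf A21" "RHinf A22" "RHinf A23" "RHinf A31" "RHinf A32" "RHinf A33"
  shows "RHinf (blk3 A11 A12 A13 A21 A22 A23 A31 A32 A33)"
  unfolding RHinf_def
proof (intro allI impI)
  fix i j assume "i < dim_row (blk3 A11 A12 A13 A21 A22 A23 A31 A32 A33)" "j < dim_col (blk3 A11 A12 A13 A21 A22 A23 A31 A32 A33)"
  then have ij: "i < r1+r2+r3" "j < c1+c2+c3" using blk3_carrier[OF c] by auto
  show "stable_rf (blk3 A11 A12 A13 A21 A22 A23 A31 A32 A33 $$ (i,j))"
    unfolding blk3_index[OF c ij] using c s ij unfolding RHinf_def by auto
qed



lemma mad: "dim_col A = dim_row B \<Longrightarrow> dim_row B = dim_row C \<Longrightarrow> dim_col B = dim_col C \<Longrightarrow>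
  A * (B + C) = A * B + A * (C :: 'a :: semiring_0 mat)"
  by (rule mult_add_distrib_mat[of _ "dim_row A" "dim_col A" _ "dim_col B"]) auto
lemma amd: "dim_row A = dim_row B \<Longrightarrow> dim_col A = dim_col B \<Longrightarrow> dim_col A = dim_row C \<Longrightarrow>
  (A + B) * C = A * C + B * (C :: 'a :: semiring_0 mat)"
  by (rule add_mult_distrib_mat[of _ "dim_row A" "dim_col A" _ _ "dim_col C"]) auto
lemma mass: "dim_col A = dim_row B \<Longrightarrow> dim_col B = dim_row C \<Longrightarrow> A * B * C = A * (B * (C :: 'a :: semiring_0 mat))"
  by (rule assoc_mult_mat[of _ "dim_row A" "dim_col A" _ "dim_col B" _ "dim_col C"]) auto
lemmas mdist = mad amd mass

lemma fb_inv_check: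
  assumes c1: "A1 \<in> carrier_mat n n" "B1 \<in> carrier_mat n m" "C1 \<in> carrier_mat m n" "D1 \<in> carrier_mat m m"
  and c2: "A2 \<in> carrier_mat n n" "B2 \<in> carrier_mat n m" "C2 \<in> carrier_mat m n" "D2 \<in> carrier_mat m m"
  and e: "A1 * A2 + B1 * C2 = 1\<^sub>m n" "A1 * B2 + B1 * D2 = 0\<^sub>m n m" "C1 * A2 + D1 * C2 = 0\<^sub>m m n" "C1 * B2 + D1 * D2 = 1\<^sub>m m"
  shows "four_block_mat A1 B1 C1 D1 * four_block_mat A2 B2 C2 D2 = (1\<^sub>m (n+m) :: 'a::semiring_1 mat)"
  unfolding mult_four_block_mat[OF c1 c2] e by simp

lemma int_stable_intro:
  assumes H: "H \<in> carrier_mat n m" and C: "C \<in> carrier_mat m n" and B: "B \<in> carrier_mat (n+m) (n+m)"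
    and MB: "four_block_mat (1\<^sub>m n) (- H) (- C) (1\<^sub>m m) * B = 1\<^sub>m (n+m)" and s: "RHinf B"
  shows "int_stable H C"
proof -
  let ?M = "four_block_mat (1\<^sub>m n) (- H) (- C) (1\<^sub>m m)"
  have M: "?M \<in> carrier_mat (n+m) (n+m)" using H C by auto
  have BM: "B * ?M = 1\<^sub>m (n+m)" using mat_mult_left_right_inverse[OF M B MB] .
  show ?thesis unfolding int_stable_def Let_def inverts_mat_def using H C B M MB BM s
    by (intro conjI exI[of _ B]) auto
qed

lemma int_stable_elim:
  assumes H: "H \<in> carrier_mat n m" and st: "int_stable H C"
  obtains B where "B \<in> carrier_mat (n+m) (n+m)" "C \<in> carrier_mat m n"
    "four_block_mat (1\<^sub>m n) (- H) (- C) (1\<^sub>m m) * B = 1\<^sub>m (n+m)"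
    "B * four_block_mat (1\<^sub>m n) (- H) (- C) (1\<^sub>m m) = 1\<^sub>m (n+m)" "RHinf B"
proof -
  from st H have C: "C \<in> carrier_mat m n" unfolding int_stable_def by auto
  let ?M = "four_block_mat (1\<^sub>m n) (- H) (- C) (1\<^sub>m m)"
  from st H obtain B where MB: "?M * B = 1\<^sub>m (n+m)" and BM: "B * ?M = 1\<^sub>m (dim_row B)" and s: "RHinf B"
    unfolding int_stable_def Let_def inverts_mat_def by auto
  have "dim_col B = n+m" using arg_cong[OF MB, of dim_col] by simp
  moreover have "dim_row B = n+m" using arg_cong[OF BM, of dim_col] C H by simp
  ultimately have Bc: "B \<in> carrier_mat (n+m) (n+m)" by auto
  show ?thesis using that[OF Bc C MB _ s] BM Bc by auto
qed

lemma int_stable_W1: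
  assumes G: "G \<in> carrier_mat n m" and C: "C \<in> carrier_mat m n" and sG: "RHinf G"
    and W: "W \<in> carrier_mat m n" and sW: "RHinf W" and eq: "W = C + C * G * W"
  shows "int_stable G C"
proof -
  let ?B = "four_block_mat (1\<^sub>m n + G * W) (G + G * W * G) W (1\<^sub>m m + W * G)"
  have B: "?B \<in> carrier_mat (n+m) (n+m)" using G W by auto
  have eq': "W = C + C * (G * W)" using eq G C W by simp
  have e1: "1\<^sub>m n * (1\<^sub>m n + G * W) + - G * W = 1\<^sub>m n"
    using G W by (intro eq_matI) auto
  have e2: "1\<^sub>m n * (G + G * W * G) + - G * (1\<^sub>m m + W * G) = 0\<^sub>m n m"
  proof -
    have d: "G * (1\<^sub>m m + W * G) = G + G * (W * G)"
      using G W by (subst mult_add_distrib_mat[of _ n m]) auto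
    have "1\<^sub>m n * (G + G * W * G) + - G * (1\<^sub>m m + W * G) = (G + G * (W * G)) + - (G + G * (W * G))"
      using G W by (simp add: d)
    also have "\<dots> = 0\<^sub>m n m" using G W by (intro eq_matI) auto
    finally show ?thesis .
  qed
  have e3: "- C * (1\<^sub>m n + G * W) + 1\<^sub>m m * W = 0\<^sub>m m n"
  proof -
    have "- C * (1\<^sub>m n + G * W) + 1\<^sub>m m * W = - (C + C * (G * W)) + W"
      using G W C by (simp add: mdist; (intro eq_matI; auto)?)
    also have "\<dots> = - W + W" using eq' by simp
    also have "\<dots> = 0\<^sub>m m n" using W by (intro eq_matI) auto
    finally show ?thesis .
  qed
  have e4: "- C * (G + G * W * G) + 1\<^sub>m m * (1\<^sub>m m + W * G) = 1\<^sub>m m"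
  proof -
    have "- C * (G + G * W * G) + 1\<^sub>m m * (1\<^sub>m m + W * G) = - ((C + C * (G * W)) * G) + (1\<^sub>m m + W * G)"
      using G W C by (simp add: mdist; (intro eq_matI; auto)?)
    also have "\<dots> = - (W * G) + (1\<^sub>m m + W * G)" using eq' by simp
    also have "\<dots> = 1\<^sub>m m" using W G by (intro eq_matI) auto
    finally show ?thesis .
  qed
  have "four_block_mat (1\<^sub>m n) (- G) (- C) (1\<^sub>m m) * ?B = 1\<^sub>m (n+m)"
    using G W C by (intro fb_inv_check e1 e2 e3 e4) auto
  moreover have "RHinf ?B" using G W sG sW
    by (intro RHinf_four_block[of _ n n _ m _ m] RHinf_add RHinf_mult RHinf_one) auto
  ultimately show ?thesis using int_stable_intro[OF G C B] by blast
qed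

lemma addneg_eq: "X \<in> carrier_mat r c \<Longrightarrow> Y \<in> carrier_mat r c \<Longrightarrow> X + - Y = Z \<Longrightarrow> X = Z + (Y :: 'a :: ab_group_add mat)"
  by (intro eq_matI) (auto dest!: arg_cong[of _ _ "\<lambda>M. M $$ (_,_)"] simp: algebra_simps)

lemma negadd_eq: "X \<in> carrier_mat r c \<Longrightarrow> Y \<in> carrier_mat r c \<Longrightarrow> - Y + X = Z \<Longrightarrow> X = Z + (Y :: 'a :: ab_group_add mat)"
  by (intro eq_matI) (auto dest!: arg_cong[of _ _ "\<lambda>M. M $$ (_,_)"] simp: algebra_simps)

lemma fb_eq_blocks:
  assumes "X1 \<in> carrier_mat ra ca" "X2 \<in> carrier_mat ra cb" "X3 \<in> carrier_mat rb ca" "X4 \<in> carrier_mat rb cb"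
    "Y1 \<in> carrier_mat ra ca" "Y2 \<in> carrier_mat ra cb" "Y3 \<in> carrier_mat rb ca" "Y4 \<in> carrier_mat rb cb"
    and e: "four_block_mat X1 X2 X3 X4 = four_block_mat Y1 Y2 Y3 Y4"
  shows "X1 = Y1" "X2 = Y2" "X3 = Y3" "X4 = Y4"
  using sb_four_block[OF assms(1-4)] sb_four_block[OF assms(5-8)] e by metis+

lemma int_stable_W2:
  assumes H: "H \<in> carrier_mat n m" and C: "C \<in> carrier_mat m n" and sC: "RHinf C"
    and W: "W \<in> carrier_mat n m" and sW: "RHinf W" and eq: "W = H + H * C * W"
  shows "int_stable H C"
proof -
  let ?B = "four_block_mat (1\<^sub>m n + W * C) W (C + C * W * C) (1\<^sub>m m + C * W)"
  have B: "?B \<in> carrier_mat (n+m) (n+m)" using C W by auto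
  have eq': "W = H + H * (C * W)" using eq H C W by simp
  have WC: "W * C = H * C + H * (C * (W * C))"
  proof -
    have "W * C = (H + H * (C * W)) * C" using eq' by simp
    also have "\<dots> = H * C + H * (C * (W * C))" using H C W by (simp add: mdist; (intro eq_matI; auto)?)
    finally show ?thesis .
  qed
  have e1: "1\<^sub>m n * (1\<^sub>m n + W * C) + - H * (C + C * W * C) = 1\<^sub>m n"
  proof -
    have "1\<^sub>m n * (1\<^sub>m n + W * C) + - H * (C + C * W * C) = (1\<^sub>m n + W * C) + - (H * C + H * (C * (W * C)))"
      using H W C by (simp add: mdist; (intro eq_matI; auto)?)
    also have "\<dots> = (1\<^sub>m n + W * C) + - (W * C)" unfolding WC[symmetric] ..
    also have "\<dots> = 1\<^sub>m n" using W C by (intro eq_matI) auto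
    finally show ?thesis .
  qed
  have e2: "1\<^sub>m n * W + - H * (1\<^sub>m m + C * W) = 0\<^sub>m n m"
  proof -
    have "1\<^sub>m n * W + - H * (1\<^sub>m m + C * W) = W + - (H + H * (C * W))"
      using H W C by (simp add: mdist; (intro eq_matI; auto)?)
    also have "\<dots> = W + - W" unfolding eq'[symmetric] ..
    also have "\<dots> = 0\<^sub>m n m" using W by (intro eq_matI) auto
    finally show ?thesis .
  qed
  have e3: "- C * (1\<^sub>m n + W * C) + 1\<^sub>m m * (C + C * W * C) = 0\<^sub>m m n"
    using H W C by (simp add: mdist; (intro eq_matI; auto)?)
  have e4: "- C * W + 1\<^sub>m m * (1\<^sub>m m + C * W) = 1\<^sub>m m"
    using H W C by (simp add: mdist; (intro eq_matI; auto)?)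
  have "four_block_mat (1\<^sub>m n) (- H) (- C) (1\<^sub>m m) * ?B = 1\<^sub>m (n+m)"
    using H W C by (intro fb_inv_check e1 e2 e3 e4) auto
  moreover have "RHinf ?B" using C W sC sW
    by (intro RHinf_four_block[of _ n n _ m _ m] RHinf_add RHinf_mult RHinf_one) auto
  ultimately show ?thesis using int_stable_intro[OF H C B] by blast
qed

lemma B_split: "B \<in> carrier_mat (n+m) (n+m) \<Longrightarrow> B = four_block_mat (sb B 0 n 0 n) (sb B 0 n n m) (sb B n m 0 n) (sb B n m n m)"
  by (rule mat_eq_sb2[of _ n m n m]) (auto simp: sb_four_block)

lemma int_stable_E1:
  assumes G: "G \<in> carrier_mat n m" and st: "int_stable G C"
  obtains W where "W \<in> carrier_mat m n" "C \<in> carrier_mat m n" "RHinf W" "W = C + C * G * W" "W = C + W * G * C"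
proof -
  obtain B where B: "B \<in> carrier_mat (n+m) (n+m)" and C: "C \<in> carrier_mat m n"
    and MB: "four_block_mat (1\<^sub>m n) (- G) (- C) (1\<^sub>m m) * B = 1\<^sub>m (n+m)"
    and BM: "B * four_block_mat (1\<^sub>m n) (- G) (- C) (1\<^sub>m m) = 1\<^sub>m (n+m)" and s: "RHinf B"
    using int_stable_elim[OF G st] by blast
  define B11 where "B11 = sb B 0 n 0 n"
  define B12 where "B12 = sb B 0 n n m"
  define B21 where "B21 = sb B n m 0 n"
  define B22 where "B22 = sb B n m n m"
  have c: "B11 \<in> carrier_mat n n" "B12 \<in> carrier_mat n m" "B21 \<in> carrier_mat m n" "B22 \<in> carrier_mat m m"
    unfolding B11_def B12_def B21_def B22_def by auto
  have BB: "B = four_block_mat B11 B12 B21 B22" unfolding B11_def B12_def B21_def B22_def using B_split[OF B] .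
  have MB': "four_block_mat (1\<^sub>m n * B11 + - G * B21) (1\<^sub>m n * B12 + - G * B22)
      (- C * B11 + 1\<^sub>m m * B21) (- C * B12 + 1\<^sub>m m * B22) = four_block_mat (1\<^sub>m n) (0\<^sub>m n m) (0\<^sub>m m n) (1\<^sub>m m)"
    using MB G C c unfolding BB by (subst (asm) mult_four_block_mat[of _ n n _ m _ m _ _ n _ m]) auto
  have BM': "four_block_mat (B11 * 1\<^sub>m n + B12 * - C) (B11 * - G + B12 * 1\<^sub>m m)
      (B21 * 1\<^sub>m n + B22 * - C) (B21 * - G + B22 * 1\<^sub>m m) = four_block_mat (1\<^sub>m n) (0\<^sub>m n m) (0\<^sub>m m n) (1\<^sub>m m)"
    using BM G C c unfolding BB by (subst (asm) mult_four_block_mat[of _ n n _ m _ m _ _ n _ m]) auto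
  note eM = fb_eq_blocks[where ra=n and ca=n and cb=m and rb=m, OF _ _ _ _ _ _ _ _ MB'] and eB = fb_eq_blocks[where ra=n and ca=n and cb=m and rb=m, OF _ _ _ _ _ _ _ _ BM']
  have a: "B11 + - (G * B21) = 1\<^sub>m n" using eM(1) G C c by simp
  have b: "- (C * B11) + B21 = 0\<^sub>m m n" using eM(3) G C c by simp
  have c': "B21 + - (B22 * C) = 0\<^sub>m m n" using eB(3) G C c by simp
  have d': "- (B21 * G) + B22 = 1\<^sub>m m" using eB(4) G C c by simp
  have a2: "B11 = 1\<^sub>m n + G * B21" using addneg_eq[OF _ _ a] c G by simp
  have b2: "B21 = 0\<^sub>m m n + C * B11" using negadd_eq[OF _ _ b] c C by simp
  have c2: "B21 = 0\<^sub>m m n + B22 * C" using addneg_eq[OF _ _ c'] c C by simp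
  have d2: "B22 = 1\<^sub>m m + B21 * G" using negadd_eq[OF _ _ d'] c G by simp
  have W1: "B21 = C + C * G * B21"
  proof -
    have "B21 = C * (1\<^sub>m n + G * B21)" using b2 a2 c C by simp
    also have "\<dots> = C + C * G * B21" using c C G by (simp add: mdist; (intro eq_matI; auto)?)
    finally show ?thesis .
  qed
  have W2: "B21 = C + B21 * G * C"
  proof -
    have "B21 = (1\<^sub>m m + B21 * G) * C" using c2 d2 c C by simp
    also have "\<dots> = C + B21 * G * C" using c C G by (simp add: mdist; (intro eq_matI; auto)?)
    finally show ?thesis .
  qed
  have "RHinf B21" unfolding B21_def using RHinf_sb[OF s B] by auto
  then show ?thesis using that[OF c(3) C _ W1 W2] by blast
qed

lemma int_stable_E2:
  assumes H: "H \<in> carrier_mat n m" and st: "int_stable H C"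
  obtains R where "R \<in> carrier_mat n m" "C \<in> carrier_mat m n" "RHinf R" "R = H + H * C * R"
proof -
  obtain B where B: "B \<in> carrier_mat (n+m) (n+m)" and C: "C \<in> carrier_mat m n"
    and MB: "four_block_mat (1\<^sub>m n) (- H) (- C) (1\<^sub>m m) * B = 1\<^sub>m (n+m)" and s: "RHinf B"
    using int_stable_elim[OF H st] by blast
  define B11 where "B11 = sb B 0 n 0 n"
  define B12 where "B12 = sb B 0 n n m"
  define B21 where "B21 = sb B n m 0 n"
  define B22 where "B22 = sb B n m n m"
  have c: "B11 \<in> carrier_mat n n" "B12 \<in> carrier_mat n m" "B21 \<in> carrier_mat m n" "B22 \<in> carrier_mat m m"
    unfolding B11_def B12_def B21_def B22_def by auto
  have BB: "B = four_block_mat B11 B12 B21 B22" unfolding B11_def B12_def B21_def B22_def using B_split[OF B] .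
  have MB': "four_block_mat (1\<^sub>m n * B11 + - H * B21) (1\<^sub>m n * B12 + - H * B22)
      (- C * B11 + 1\<^sub>m m * B21) (- C * B12 + 1\<^sub>m m * B22) = four_block_mat (1\<^sub>m n) (0\<^sub>m n m) (0\<^sub>m m n) (1\<^sub>m m)"
    using MB H C c unfolding BB by (subst (asm) mult_four_block_mat[of _ n n _ m _ m _ _ n _ m]) auto
  note eM = fb_eq_blocks[where ra=n and ca=n and cb=m and rb=m, OF _ _ _ _ _ _ _ _ MB']
  have a: "B12 + - (H * B22) = 0\<^sub>m n m" using eM(2) H C c by simp
  have b: "- (C * B12) + B22 = 1\<^sub>m m" using eM(4) H C c by simp
  have a2: "B12 = 0\<^sub>m n m + H * B22" using addneg_eq[OF _ _ a] c H by simp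
  have b2: "B22 = 1\<^sub>m m + C * B12" using negadd_eq[OF _ _ b] c C by simp
  have R1: "B12 = H + H * C * B12"
  proof -
    have "B12 = H * (1\<^sub>m m + C * B12)" using a2 b2 c H by simp
    also have "\<dots> = H + H * C * B12" using c C H by (simp add: mdist; (intro eq_matI; auto)?)
    finally show ?thesis .
  qed
  have "RHinf B12" unfolding B12_def using RHinf_sb[OF s B] by auto
  then show ?thesis using that[OF c(2) C _ R1] by blast
qed



definition okq :: "real \<Rightarrow> rfun \<Rightarrow> bool" where
  "okq s x \<longleftrightarrow> (\<exists>p q. poly q s \<noteq> 0 \<and> x = Fract p q)"

definition evq :: "real \<Rightarrow> rfun \<Rightarrow> real" where
  "evq s x = (SOME v. \<exists>p q. poly q s \<noteq> 0 \<and> x = Fract p q \<and> v = poly p s / poly q s)"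

lemma evq_Fract: assumes "poly q s \<noteq> 0" shows "evq s (Fract p q) = poly p s / poly q s"
proof -
  have ex: "\<exists>v. \<exists>p' q'. poly q' s \<noteq> 0 \<and> Fract p q = Fract p' q' \<and> v = poly p' s / poly q' s"
    using assms by blast
  have "\<exists>p' q'. poly q' s \<noteq> 0 \<and> Fract p q = Fract p' q' \<and> evq s (Fract p q) = poly p' s / poly q' s"
    unfolding evq_def by (rule someI_ex[OF ex])
  then obtain p' q' where pq: "poly q' s \<noteq> 0" "Fract p q = Fract p' q'" "evq s (Fract p q) = poly p' s / poly q' s"
    by blast
  have nz: "q \<noteq> 0" "q' \<noteq> 0" using assms pq(1) by auto
  have "p * q' = p' * q" using pq(2) eq_fract(1)[OF nz] by simp
  then have "poly p s * poly q' s = poly p' s * poly q s" by (metis poly_mult)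
  then have "poly p s / poly q s = poly p' s / poly q' s" using assms pq(1) by (simp add: frac_eq_eq)
  then show ?thesis using pq(3) by simp
qed

lemma okq_add: "okq s x \<Longrightarrow> okq s y \<Longrightarrow> okq s (x+y) \<and> evq s (x+y) = evq s x + evq s y"
proof -
  assume "okq s x" "okq s y"
  then obtain p1 q1 p2 q2 where a: "poly q1 s \<noteq> 0" "x = Fract p1 q1" and b: "poly q2 s \<noteq> 0" "y = Fract p2 q2"
    unfolding okq_def by blast
  have nz: "q1 \<noteq> 0" "q2 \<noteq> 0" using a b by auto
  have xy: "x + y = Fract (p1*q2 + p2*q1) (q1*q2)" using a b nz by simp
  moreover have pz: "poly (q1*q2) s \<noteq> 0" using a b by simp
  ultimately have "okq s (x+y)" unfolding okq_def by blast
  moreover have "evq s (x+y) = evq s x + evq s y" unfolding xy using a b pz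
    by (simp add: evq_Fract field_simps)
  ultimately show ?thesis by blast
qed

lemma okq_mult: "okq s x \<Longrightarrow> okq s y \<Longrightarrow> okq s (x*y) \<and> evq s (x*y) = evq s x * evq s y"
proof -
  assume "okq s x" "okq s y"
  then obtain p1 q1 p2 q2 where a: "poly q1 s \<noteq> 0" "x = Fract p1 q1" and b: "poly q2 s \<noteq> 0" "y = Fract p2 q2"
    unfolding okq_def by blast
  have xy: "x * y = Fract (p1*p2) (q1*q2)" using a b by simp
  moreover have pz: "poly (q1*q2) s \<noteq> 0" using a b by simp
  ultimately have "okq s (x*y)" unfolding okq_def by blast
  moreover have "evq s (x*y) = evq s x * evq s y" unfolding xy using a b pz
    by (simp add: evq_Fract field_simps)
  ultimately show ?thesis by blast
qed

lemma stable_okq: "stable_rf x \<Longrightarrow> s \<ge> 0 \<Longrightarrow> okq s x"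
  unfolding stable_iff okq_def using hurw_eval by blast

lemma exists_pos_nonroot: assumes "p \<noteq> (0::real poly)" shows "\<exists>s>0. poly p s \<noteq> 0"
proof -
  let ?S = "{x. poly p x = 0}"
  have fin: "finite ?S" using poly_roots_finite[OF assms] .
  let ?s = "Max (insert 0 ?S) + 1"
  have "Max (insert 0 ?S) \<ge> 0" using fin by simp
  hence pos: "?s > 0" by linarith
  have "?s \<notin> ?S"
  proof
    assume "?s \<in> ?S"
    hence "?s \<le> Max (insert 0 ?S)" using fin by (intro Max_ge) auto
    thus False by simp
  qed
  then show ?thesis using pos by blast
qed

definition Em :: "nat \<Rightarrow> nat \<Rightarrow> nat \<Rightarrow> nat \<Rightarrow> 'a::zero \<Rightarrow> 'a mat" where
  "Em p q j i x = mat p q (\<lambda>(a,b). if a = j \<and> b = i then x else 0)"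

lemma Em_carrier[simp]: "Em p q j i x \<in> carrier_mat p q" by (simp add: Em_def)
lemma Em_dim[simp]: "dim_row (Em p q j i x) = p" "dim_col (Em p q j i x) = q" by (auto simp add: Em_def)

lemma Em_index[simp]: "a < p \<Longrightarrow> b < q \<Longrightarrow> Em p q j i x $$ (a,b) = (if a = j \<and> b = i then x else 0)"
  by (simp add: Em_def)

lemma Em_add: "Em p q j i x + Em p q j i y = Em p q j i (x + y :: 'a :: monoid_add)"
  unfolding Em_def by (intro eq_matI) auto

lemma Em_mult_left: assumes M: "M \<in> carrier_mat q n" and ij: "j < p" "i < q"
  shows "Em p q j i x * M = mat p n (\<lambda>(a,c). if a = j then x * M $$ (i,c) else (0::'a::comm_ring_1))"
proof (intro eq_matI)
  fix a c assume ac: "a < dim_row (mat p n (\<lambda>(a,c). if a = j then x * M $$ (i,c) else 0))"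
     "c < dim_col (mat p n (\<lambda>(a,c). if a = j then x * M $$ (i,c) else 0))"
  hence ac: "a < p" "c < n" by auto
  have "(Em p q j i x * M) $$ (a,c) = (\<Sum>b<q. Em p q j i x $$ (a,b) * M $$ (b,c))"
    using ac M by (intro mult_entry) auto
  also have "\<dots> = (\<Sum>b<q. if b = i then (if a = j then x * M $$ (i,c) else 0) else 0)"
    using ac by (intro sum.cong) auto
  also have "\<dots> = (if a = j then x * M $$ (i,c) else 0)" using ij by (simp add: sum.delta)
  finally show "(Em p q j i x * M) $$ (a,c) = mat p n (\<lambda>(a,c). if a = j then x * M $$ (i,c) else 0) $$ (a,c)"
    using ac by simp
qed (use M in auto)

lemma Em_mult: assumes M: "M \<in> carrier_mat q p" and ij: "j < p" "i < q"
  shows "Em p q j i x * M * Em p q j i y = Em p q j i (x * M $$ (i,j) * (y::'a::comm_ring_1))"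
proof -
  have "Em p q j i x * M * Em p q j i y = mat p p (\<lambda>(a,c). if a = j then x * M $$ (i,c) else 0) * Em p q j i y"
    using Em_mult_left[OF M ij] by simp
  also have "\<dots> = Em p q j i (x * M $$ (i,j) * y)"
  proof (intro eq_matI)
    fix a b assume "a < dim_row (Em p q j i (x * M $$ (i,j) * y))" "b < dim_col (Em p q j i (x * M $$ (i,j) * y))"
    hence ab: "a < p" "b < q" by auto
    have "(mat p p (\<lambda>(a,c). if a = j then x * M $$ (i,c) else 0) * Em p q j i y) $$ (a,b)
       = (\<Sum>c<p. mat p p (\<lambda>(a,c). if a = j then x * M $$ (i,c) else 0) $$ (a,c) * Em p q j i y $$ (c,b))"
      using ab by (intro mult_entry) auto
    also have "\<dots> = (\<Sum>c<p. if c = j then (if a = j \<and> b = i then x * M $$ (i,j) * y else 0) else 0)"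
      using ab by (intro sum.cong) auto
    also have "\<dots> = Em p q j i (x * M $$ (i,j) * y) $$ (a,b)" using ij ab by (simp add: sum.delta)
    finally show "(mat p p (\<lambda>(a,c). if a = j then x * M $$ (i,c) else 0) * Em p q j i y) $$ (a,b)
       = Em p q j i (x * M $$ (i,j) * y) $$ (a,b)" .
  qed auto
  finally show ?thesis .
qed



lemma sb_CGW:
  assumes G: "G \<in> carrier_mat (a1+a2+a3) (b1+b2+b3)" and C: "C \<in> carrier_mat (b1+b2+b3) (a1+a2+a3)"
    and W: "W \<in> carrier_mat (b1+b2+b3) (a1+a2+a3)" and p: "p0+pn \<le> b1+b2+b3" and q: "q0+qn \<le> a1+a2+a3"
  shows "sb (C + C * (G * W)) p0 pn q0 qn = sb C p0 pn q0 qn +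
    (sb C p0 pn 0 a1 * (sb G 0 a1 0 b1 * sb W 0 b1 q0 qn + sb G 0 a1 b1 b2 * sb W b1 b2 q0 qn + sb G 0 a1 (b1+b2) b3 * sb W (b1+b2) b3 q0 qn)
   + sb C p0 pn a1 a2 * (sb G a1 a2 0 b1 * sb W 0 b1 q0 qn + sb G a1 a2 b1 b2 * sb W b1 b2 q0 qn + sb G a1 a2 (b1+b2) b3 * sb W (b1+b2) b3 q0 qn)
   + sb C p0 pn (a1+a2) a3 * (sb G (a1+a2) a3 0 b1 * sb W 0 b1 q0 qn + sb G (a1+a2) a3 b1 b2 * sb W b1 b2 q0 qn + sb G (a1+a2) a3 (b1+b2) b3 * sb W (b1+b2) b3 q0 qn))"
proof -
  have GW: "G * W \<in> carrier_mat (a1+a2+a3) (a1+a2+a3)" using G W by auto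
  have "sb (C + C * (G * W)) p0 pn q0 qn = sb C p0 pn q0 qn + sb (C * (G * W)) p0 pn q0 qn"
    using C GW p q by (intro sb_add[of _ "b1+b2+b3" "a1+a2+a3"]) auto
  also have "sb (C * (G * W)) p0 pn q0 qn = sb C p0 pn 0 a1 * sb (G * W) 0 a1 q0 qn + sb C p0 pn a1 a2 * sb (G * W) a1 a2 q0 qn
     + sb C p0 pn (a1+a2) a3 * sb (G * W) (a1+a2) a3 q0 qn"
    using sb_mult3[OF C GW p q] .
  also have "sb (G * W) 0 a1 q0 qn = sb G 0 a1 0 b1 * sb W 0 b1 q0 qn + sb G 0 a1 b1 b2 * sb W b1 b2 q0 qn + sb G 0 a1 (b1+b2) b3 * sb W (b1+b2) b3 q0 qn"
    using sb_mult3[OF G W _ q] by simp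
  also have "sb (G * W) a1 a2 q0 qn = sb G a1 a2 0 b1 * sb W 0 b1 q0 qn + sb G a1 a2 b1 b2 * sb W b1 b2 q0 qn + sb G a1 a2 (b1+b2) b3 * sb W (b1+b2) b3 q0 qn"
    using sb_mult3[OF G W _ q] by simp
  also have "sb (G * W) (a1+a2) a3 q0 qn = sb G (a1+a2) a3 0 b1 * sb W 0 b1 q0 qn + sb G (a1+a2) a3 b1 b2 * sb W b1 b2 q0 qn + sb G (a1+a2) a3 (b1+b2) b3 * sb W (b1+b2) b3 q0 qn"
    using sb_mult3[OF G W _ q] by simp
  finally show ?thesis .
qed

lemma sb_WGC:
  assumes G: "G \<in> carrier_mat (a1+a2+a3) (b1+b2+b3)" and C: "C \<in> carrier_mat (b1+b2+b3) (a1+a2+a3)"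
    and W: "W \<in> carrier_mat (b1+b2+b3) (a1+a2+a3)" and p: "p0+pn \<le> b1+b2+b3" and q: "q0+qn \<le> a1+a2+a3"
  shows "sb (C + W * G * C) p0 pn q0 qn = sb C p0 pn q0 qn +
    ((sb W p0 pn 0 a1 * sb G 0 a1 0 b1 + sb W p0 pn a1 a2 * sb G a1 a2 0 b1 + sb W p0 pn (a1+a2) a3 * sb G (a1+a2) a3 0 b1) * sb C 0 b1 q0 qn
   + (sb W p0 pn 0 a1 * sb G 0 a1 b1 b2 + sb W p0 pn a1 a2 * sb G a1 a2 b1 b2 + sb W p0 pn (a1+a2) a3 * sb G (a1+a2) a3 b1 b2) * sb C b1 b2 q0 qn
   + (sb W p0 pn 0 a1 * sb G 0 a1 (b1+b2) b3 + sb W p0 pn a1 a2 * sb G a1 a2 (b1+b2) b3 + sb W p0 pn (a1+a2) a3 * sb G (a1+a2) a3 (b1+b2) b3) * sb C (b1+b2) b3 q0 qn)"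
proof -
  have WG: "W * G \<in> carrier_mat (b1+b2+b3) (b1+b2+b3)" using G W by auto
  have "sb (C + W * G * C) p0 pn q0 qn = sb C p0 pn q0 qn + sb (W * G * C) p0 pn q0 qn"
    using C WG p q by (intro sb_add[of _ "b1+b2+b3" "a1+a2+a3"]) auto
  also have "sb (W * G * C) p0 pn q0 qn = sb (W * G) p0 pn 0 b1 * sb C 0 b1 q0 qn + sb (W * G) p0 pn b1 b2 * sb C b1 b2 q0 qn
     + sb (W * G) p0 pn (b1+b2) b3 * sb C (b1+b2) b3 q0 qn"
    using sb_mult3[OF WG C p q] .
  also have "sb (W * G) p0 pn 0 b1 = sb W p0 pn 0 a1 * sb G 0 a1 0 b1 + sb W p0 pn a1 a2 * sb G a1 a2 0 b1 + sb W p0 pn (a1+a2) a3 * sb G (a1+a2) a3 0 b1"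
    using sb_mult3[OF W G p] by simp
  also have "sb (W * G) p0 pn b1 b2 = sb W p0 pn 0 a1 * sb G 0 a1 b1 b2 + sb W p0 pn a1 a2 * sb G a1 a2 b1 b2 + sb W p0 pn (a1+a2) a3 * sb G (a1+a2) a3 b1 b2"
    using sb_mult3[OF W G p] by simp
  also have "sb (W * G) p0 pn (b1+b2) b3 = sb W p0 pn 0 a1 * sb G 0 a1 (b1+b2) b3 + sb W p0 pn a1 a2 * sb G a1 a2 (b1+b2) b3 + sb W p0 pn (a1+a2) a3 * sb G (a1+a2) a3 (b1+b2) b3"
    using sb_mult3[OF W G p] by simp
  finally show ?thesis .
qed

locale rsys =
  fixes nw nz ny nv nd nu :: nat
    and Gwv Gwd Gwu Gzv Gzd Gzu Gyv Gyd Gyu K :: tfm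
  assumes dims: "Gwv \<in> carrier_mat nw nv" "Gwd \<in> carrier_mat nw nd" "Gwu \<in> carrier_mat nw nu"
    "Gzv \<in> carrier_mat nz nv" "Gzd \<in> carrier_mat nz nd" "Gzu \<in> carrier_mat nz nu"
    "Gyv \<in> carrier_mat ny nv" "Gyd \<in> carrier_mat ny nd" "Gyu \<in> carrier_mat ny nu"
    and G_stable: "RHinf (blk3 Gwv Gwd Gwu Gzv Gzd Gzu Gyv Gyd Gyu)"
    and K_dim: "K \<in> carrier_mat nu ny"
begin

abbreviation "Gf \<equiv> blk3 Gwv Gwd Gwu Gzv Gzd Gzu Gyv Gyd Gyu"
abbreviation "Cb Gbar \<equiv> blk3 Gbar (0\<^sub>m nv nz) (0\<^sub>m nv ny) (0\<^sub>m nd nw) (0\<^sub>m nd nz) (0\<^sub>m nd ny) (0\<^sub>m nu nw) (0\<^sub>m nu nz) K"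

lemma Gf_carrier: "Gf \<in> carrier_mat (nw+nz+ny) (nv+nd+nu)"
  using blk3_carrier[OF dims] .

lemma Cb_carrier: "Gbar \<in> carrier_mat nv nw \<Longrightarrow> Cb Gbar \<in> carrier_mat (nv+nd+nu) (nw+nz+ny)"
  using K_dim by (intro blk3_carrier) auto

lemmas Gblk = sb_blk3[OF dims]

lemma Cblk: assumes "Gbar \<in> carrier_mat nv nw"
  shows "sb (Cb Gbar) 0 nv 0 nw = Gbar" "sb (Cb Gbar) 0 nv nw nz = 0\<^sub>m nv nz" "sb (Cb Gbar) 0 nv (nw+nz) ny = 0\<^sub>m nv ny"
    "sb (Cb Gbar) nv nd 0 nw = 0\<^sub>m nd nw" "sb (Cb Gbar) nv nd nw nz = 0\<^sub>m nd nz" "sb (Cb Gbar) nv nd (nw+nz) ny = 0\<^sub>m nd ny"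
    "sb (Cb Gbar) (nv+nd) nu 0 nw = 0\<^sub>m nu nw" "sb (Cb Gbar) (nv+nd) nu nw nz = 0\<^sub>m nu nz" "sb (Cb Gbar) (nv+nd) nu (nw+nz) ny = K"
  using sb_blk3[of Gbar nv nw "0\<^sub>m nv nz" nz "0\<^sub>m nv ny" ny "0\<^sub>m nd nw" nd "0\<^sub>m nd nz" "0\<^sub>m nd ny" "0\<^sub>m nu nw" nu "0\<^sub>m nu nz" K] assms K_dim by auto

lemma RH_blocks: "RHinf Gwv" "RHinf Gwu" "RHinf Gyv" "RHinf Gyu"
proof -
  note R = RHinf_sb[OF G_stable Gf_carrier]
  show "RHinf Gwv" using R[of 0 nw 0 nv] Gblk by simp
  show "RHinf Gwu" using R[of 0 nw "nv+nd" nu] Gblk by simp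
  show "RHinf Gyv" using R[of "nw+nz" ny 0 nv] Gblk by simp
  show "RHinf Gyu" using R[of "nw+nz" ny "nv+nd" nu] Gblk by simp
qed

lemma CGW_blk: assumes Gb: "Gbar \<in> carrier_mat nv nw" and W: "W \<in> carrier_mat (nv+nd+nu) (nw+nz+ny)"
  and q: "q0+qn \<le> nw+nz+ny"
  shows "sb (Cb Gbar + Cb Gbar * (Gf * W)) 0 nv q0 qn = sb (Cb Gbar) 0 nv q0 qn +
      Gbar * (Gwv * sb W 0 nv q0 qn + Gwd * sb W nv nd q0 qn + Gwu * sb W (nv+nd) nu q0 qn)"
    "sb (Cb Gbar + Cb Gbar * (Gf * W)) nv nd q0 qn = sb (Cb Gbar) nv nd q0 qn"
    "sb (Cb Gbar + Cb Gbar * (Gf * W)) (nv+nd) nu q0 qn = sb (Cb Gbar) (nv+nd) nu q0 qn +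
      K * (Gyv * sb W 0 nv q0 qn + Gyd * sb W nv nd q0 qn + Gyu * sb W (nv+nd) nu q0 qn)"
proof -
  note X = sb_CGW[OF Gf_carrier Cb_carrier[OF Gb] W _ q]
  show "sb (Cb Gbar + Cb Gbar * (Gf * W)) 0 nv q0 qn = sb (Cb Gbar) 0 nv q0 qn +
      Gbar * (Gwv * sb W 0 nv q0 qn + Gwd * sb W nv nd q0 qn + Gwu * sb W (nv+nd) nu q0 qn)"
    using X[of 0 nv] Gblk Cblk[OF Gb] dims Gb by simp
  show "sb (Cb Gbar + Cb Gbar * (Gf * W)) nv nd q0 qn = sb (Cb Gbar) nv nd q0 qn"
    using X[of nv nd] Gblk Cblk[OF Gb] dims Gb by simp
  show "sb (Cb Gbar + Cb Gbar * (Gf * W)) (nv+nd) nu q0 qn = sb (Cb Gbar) (nv+nd) nu q0 qn +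
      K * (Gyv * sb W 0 nv q0 qn + Gyd * sb W nv nd q0 qn + Gyu * sb W (nv+nd) nu q0 qn)"
    using X[of "nv+nd" nu] Gblk Cblk[OF Gb] dims Gb K_dim by simp
qed

end



context rsys begin

lemma if_dir:
  assumes Q: "Q \<in> carrier_mat nu ny" and sQ: "RHinf Q"
    and inv: "mat_inverse (1\<^sub>m nu + Q * Gyu) \<noteq> None"
    and Kq: "K = the (mat_inverse (1\<^sub>m nu + Q * Gyu)) * Q"
    and D: "Gwu * Q * Gyv = 0\<^sub>m nw nv"
    and Gb: "Gbar \<in> carrier_mat nv nw" and adm: "int_stable Gbar Gwv"
  shows "int_stable Gf (Cb Gbar)"
proof -
  note dm = dims K_dim
  obtain Mi where Mi: "mat_inverse (1\<^sub>m nu + Q * Gyu) = Some Mi" using inv by auto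
  have A: "1\<^sub>m nu + Q * Gyu \<in> carrier_mat nu nu" using Q dm by auto
  from mat_inverse(2)[OF A Mi] have Mi1: "(1\<^sub>m nu + Q * Gyu) * Mi = 1\<^sub>m nu" and Mi2: "Mi * (1\<^sub>m nu + Q * Gyu) = 1\<^sub>m nu"
    and Mic: "Mi \<in> carrier_mat nu nu" by auto
  have KM: "K = Mi * Q" using Kq Mi by simp
  have Qf: "Q = K + K * (Gyu * Q)"
  proof -
    have "K + K * (Gyu * Q) = Mi * ((1\<^sub>m nu + Q * Gyu) * Q)"
      unfolding KM using Mic Q dm by (simp add: mdist; (intro eq_matI; auto)?)
    also have "\<dots> = (Mi * (1\<^sub>m nu + Q * Gyu)) * Q" using Mic Q dm by (intro mass[symmetric]) auto
    also have "\<dots> = Q" unfolding Mi2 using Q by simp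
    finally show ?thesis by simp
  qed
  obtain R where R: "R \<in> carrier_mat nv nw" and sR: "RHinf R" and Rf0: "R = Gbar + Gbar * Gwv * R"
    using int_stable_E2[OF Gb adm] by blast
  have Rf: "R = Gbar + Gbar * (Gwv * R)" using Rf0 R Gb dm by simp
  have D0: "Gwu * (Q * (Gyv * X)) = 0\<^sub>m nw c" if X: "X \<in> carrier_mat nv c" for X c
  proof -
    have "Gwu * (Q * (Gyv * X)) = (Gwu * Q * Gyv) * X" using X Q dm by (simp add: mdist)
    also have "\<dots> = 0\<^sub>m nw c" unfolding D using X by simp
    finally show ?thesis .
  qed
  define W where "W = blk3 R (0\<^sub>m nv nz) (R * (Gwu * Q)) (0\<^sub>m nd nw) (0\<^sub>m nd nz) (0\<^sub>m nd ny)
      (Q * (Gyv * R)) (0\<^sub>m nu nz) (Q + Q * (Gyv * (R * (Gwu * Q))))"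
  have Wc: "W \<in> carrier_mat (nv+nd+nu) (nw+nz+ny)" unfolding W_def using R Q dm by (intro blk3_carrier) auto
  have Wblk: "sb W 0 nv 0 nw = R" "sb W 0 nv nw nz = 0\<^sub>m nv nz" "sb W 0 nv (nw+nz) ny = R * (Gwu * Q)"
    "sb W nv nd 0 nw = 0\<^sub>m nd nw" "sb W nv nd nw nz = 0\<^sub>m nd nz" "sb W nv nd (nw+nz) ny = 0\<^sub>m nd ny"
    "sb W (nv+nd) nu 0 nw = Q * (Gyv * R)" "sb W (nv+nd) nu nw nz = 0\<^sub>m nu nz"
    "sb W (nv+nd) nu (nw+nz) ny = Q + Q * (Gyv * (R * (Gwu * Q)))"
    unfolding W_def using sb_blk3[of R nv nw "0\<^sub>m nv nz" nz "R * (Gwu * Q)" ny "0\<^sub>m nd nw" nd "0\<^sub>m nd nz" "0\<^sub>m nd ny"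
      "Q * (Gyv * R)" nu "0\<^sub>m nu nz" "Q + Q * (Gyv * (R * (Gwu * Q)))"] R Q dm by auto
  have s1: "RHinf (Gwu * Q)" by (rule RHinf_mult[of _ nw nu _ ny]) (use dm Q sQ RH_blocks in auto)
  have s2: "RHinf (R * (Gwu * Q))" by (rule RHinf_mult[of _ nv nw _ ny]) (use dm Q R sR s1 in auto)
  have s3: "RHinf (Gyv * R)" by (rule RHinf_mult[of _ ny nv _ nw]) (use dm R sR RH_blocks in auto)
  have s4: "RHinf (Q * (Gyv * R))" by (rule RHinf_mult[of _ nu ny _ nw]) (use dm Q R sQ s3 in auto)
  have s5: "RHinf (Gyv * (R * (Gwu * Q)))" by (rule RHinf_mult[of _ ny nv _ ny]) (use dm Q R s2 RH_blocks in auto)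
  have s6: "RHinf (Q * (Gyv * (R * (Gwu * Q))))" by (rule RHinf_mult[of _ nu ny _ ny]) (use dm Q R s5 sQ in auto)
  have s7: "RHinf (Q + Q * (Gyv * (R * (Gwu * Q))))" by (rule RHinf_add[of _ nu ny]) (use dm Q R s6 sQ in auto)
  have sW: "RHinf W" unfolding W_def using R Q dm sR s2 s4 s7
    by (intro RHinf_blk3[of _ nv nw _ nz _ ny _ nd _ _ _ nu] RHinf_zero) auto
  note CG = CGW_blk[OF Gb Wc]
  note Cb = Cblk[OF Gb]
  let ?RHS = "Cb Gbar + Cb Gbar * (Gf * W)"
  have b11: "sb W 0 nv 0 nw = sb ?RHS 0 nv 0 nw"
    using CG(1)[of 0 nw] Wblk Cb Rf D0[OF R] R Q Gb dm by simp
  have b12: "sb W 0 nv nw nz = sb ?RHS 0 nv nw nz"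
    using CG(1)[of nw nz] Wblk Cb R Q Gb dm by simp
  have b13: "sb W 0 nv (nw+nz) ny = sb ?RHS 0 nv (nw+nz) ny"
  proof -
    have "sb ?RHS 0 nv (nw+nz) ny = Gbar * (Gwv * (R * (Gwu * Q))) + Gbar * (Gwu * Q) + Gbar * (Gwu * (Q * (Gyv * (R * (Gwu * Q)))))"
      using CG(1)[of "nw+nz" ny] Wblk Cb R Q Gb dm by (simp add: mdist; (intro eq_matI; auto)?)
    also have "\<dots> = Gbar * (Gwv * (R * (Gwu * Q))) + Gbar * (Gwu * Q)"
      using D0[of "R * (Gwu * Q)" ny] R Q Gb dm by simp
    also have "\<dots> = (Gbar + Gbar * (Gwv * R)) * (Gwu * Q)"
      using R Q Gb dm by (simp add: mdist; (intro eq_matI; auto)?)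
    also have "\<dots> = sb W 0 nv (nw+nz) ny" unfolding Rf[symmetric] Wblk ..
    finally show ?thesis by simp
  qed
  have b21: "sb W nv nd 0 nw = sb ?RHS nv nd 0 nw" using CG(2)[of 0 nw] Wblk Cb by simp
  have b22: "sb W nv nd nw nz = sb ?RHS nv nd nw nz" using CG(2)[of nw nz] Wblk Cb by simp
  have b23: "sb W nv nd (nw+nz) ny = sb ?RHS nv nd (nw+nz) ny" using CG(2)[of "nw+nz" ny] Wblk Cb by simp
  have b31: "sb W (nv+nd) nu 0 nw = sb ?RHS (nv+nd) nu 0 nw"
  proof -
    have "sb ?RHS (nv+nd) nu 0 nw = K * (Gyv * R) + K * (Gyu * (Q * (Gyv * R)))"
      using CG(3)[of 0 nw] Wblk Cb R Q Gb dm by (simp add: mdist; (intro eq_matI; auto)?)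
    also have "\<dots> = (K + K * (Gyu * Q)) * (Gyv * R)"
      using R Q Gb dm by (simp add: mdist; (intro eq_matI; auto)?)
    also have "\<dots> = sb W (nv+nd) nu 0 nw" unfolding Qf[symmetric] Wblk ..
    finally show ?thesis by simp
  qed
  have b32: "sb W (nv+nd) nu nw nz = sb ?RHS (nv+nd) nu nw nz"
    using CG(3)[of nw nz] Wblk Cb R Q Gb dm by simp
  have b33: "sb W (nv+nd) nu (nw+nz) ny = sb ?RHS (nv+nd) nu (nw+nz) ny"
  proof -
    have "sb ?RHS (nv+nd) nu (nw+nz) ny = K + K * (Gyv * (R * (Gwu * Q))) + K * (Gyu * Q) + K * (Gyu * (Q * (Gyv * (R * (Gwu * Q)))))"
      using CG(3)[of "nw+nz" ny] Wblk Cb R Q Gb dm by (simp add: mdist; (intro eq_matI; auto)?)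
    also have "\<dots> = (K + K * (Gyu * Q)) + (K + K * (Gyu * Q)) * (Gyv * (R * (Gwu * Q)))"
      using R Q Gb dm by (simp add: mdist; (intro eq_matI; auto)?)
    also have "\<dots> = sb W (nv+nd) nu (nw+nz) ny" unfolding Qf[symmetric] Wblk ..
    finally show ?thesis by simp
  qed
  have RHSc: "?RHS \<in> carrier_mat (nv+nd+nu) (nw+nz+ny)" using Cb_carrier[OF Gb] Gf_carrier Wc by auto
  have "W = ?RHS"
    by (rule mat_eq_sb3[OF Wc RHSc]) (use b11 b12 b13 b21 b22 b23 b31 b32 b33 in auto)
  then have Weq: "W = Cb Gbar + Cb Gbar * Gf * W" using Cb_carrier[OF Gb] Gf_carrier Wc by simp
  show ?thesis using int_stable_W1[OF Gf_carrier Cb_carrier[OF Gb] G_stable Wc sW Weq] .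
qed

end


lemma sum_eq_sub: "Y \<in> carrier_mat r c \<Longrightarrow> A \<in> carrier_mat r c \<Longrightarrow> B \<in> carrier_mat r c \<Longrightarrow> Y = A + B \<Longrightarrow> Y + - B = (A :: 'a :: ab_group_add mat)"
  by (intro eq_matI) auto

context rsys begin

lemma inv_facts:
  assumes Q: "Q \<in> carrier_mat nu ny" and Q1: "Q = K + K * (Gyu * Q)" and Q2: "Q = K + Q * (Gyu * K)"
  shows "(1\<^sub>m nu + - (K * Gyu)) * (1\<^sub>m nu + Q * Gyu) = 1\<^sub>m nu"
    "(1\<^sub>m nu + Q * Gyu) * (1\<^sub>m nu + - (K * Gyu)) = 1\<^sub>m nu"
    "(1\<^sub>m nu + - (K * Gyu)) * Q = K"
proof -
  note dm = dims K_dim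
  have QG: "Q * Gyu = K * Gyu + K * (Gyu * (Q * Gyu))"
  proof -
    have "Q * Gyu = (K + K * (Gyu * Q)) * Gyu" using arg_cong[OF Q1, of "\<lambda>t. t * Gyu"] .
    also have "\<dots> = K * Gyu + K * (Gyu * (Q * Gyu))" using Q dm by (simp add: mdist; (intro eq_matI; auto)?)
    finally show ?thesis .
  qed
  show e1: "(1\<^sub>m nu + - (K * Gyu)) * (1\<^sub>m nu + Q * Gyu) = 1\<^sub>m nu"
  proof -
    have "(1\<^sub>m nu + - (K * Gyu)) * (1\<^sub>m nu + Q * Gyu) = 1\<^sub>m nu + Q * Gyu + - (K * Gyu) + - (K * (Gyu * (Q * Gyu)))"
      using Q dm by (simp add: mdist; (intro eq_matI; auto)?)
    also have "\<dots> = 1\<^sub>m nu + (K * Gyu + K * (Gyu * (Q * Gyu))) + - (K * Gyu) + - (K * (Gyu * (Q * Gyu)))"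
      unfolding QG[symmetric] ..
    also have "\<dots> = 1\<^sub>m nu" using Q dm by (intro eq_matI) auto
    finally show ?thesis .
  qed
  have c1: "1\<^sub>m nu + - (K * Gyu) \<in> carrier_mat nu nu" "1\<^sub>m nu + Q * Gyu \<in> carrier_mat nu nu" using Q dm by auto
  show "(1\<^sub>m nu + Q * Gyu) * (1\<^sub>m nu + - (K * Gyu)) = 1\<^sub>m nu"
    using mat_mult_left_right_inverse[OF c1 e1] .
  show "(1\<^sub>m nu + - (K * Gyu)) * Q = K"
  proof -
    have "(1\<^sub>m nu + - (K * Gyu)) * Q = Q + - (K * (Gyu * Q))"
      using Q dm by (simp add: mdist; (intro eq_matI; auto)?)
    also have "\<dots> = K" using sum_eq_sub[of Q nu ny K "K * (Gyu * Q)"] Q1 Q dm by simp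
    finally show ?thesis .
  qed
qed

lemma partA:
  assumes st: "int_stable Gf (Cb (0\<^sub>m nv nw))"
  obtains Q where "Q \<in> carrier_mat nu ny" "RHinf Q" "Q = K + K * (Gyu * Q)" "Q = K + Q * (Gyu * K)"
proof -
  note dm = dims K_dim
  have Gb: "0\<^sub>m nv nw \<in> carrier_mat nv nw" by simp
  obtain W where W: "W \<in> carrier_mat (nv+nd+nu) (nw+nz+ny)" and sW: "RHinf W"
    and eq1: "W = Cb (0\<^sub>m nv nw) + Cb (0\<^sub>m nv nw) * Gf * W" and eq2: "W = Cb (0\<^sub>m nv nw) + W * Gf * Cb (0\<^sub>m nv nw)"
    using int_stable_E1[OF Gf_carrier st] by metis
  have eq1': "W = Cb (0\<^sub>m nv nw) + Cb (0\<^sub>m nv nw) * (Gf * W)" using eq1 W Gf_carrier Cb_carrier[OF Gb] by simp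
  note CG = CGW_blk[OF Gb W]
  note Cb = Cblk[OF Gb]
  define Q where "Q = sb W (nv+nd) nu (nw+nz) ny"
  have Qc: "Q \<in> carrier_mat nu ny" unfolding Q_def by simp
  have sQ: "RHinf Q" unfolding Q_def using RHinf_sb[OF sW W] by simp
  have Wvy: "sb W 0 nv (nw+nz) ny = 0\<^sub>m nv ny"
    using CG(1)[of "nw+nz" ny] eq1'[symmetric] Cb dm by simp
  have Wdy: "sb W nv nd (nw+nz) ny = 0\<^sub>m nd ny"
    using CG(2)[of "nw+nz" ny] eq1'[symmetric] Cb dm by simp
  have Q1: "Q = K + K * (Gyu * Q)"
    using CG(3)[of "nw+nz" ny] eq1'[symmetric] Cb dm Wvy Wdy unfolding Q_def by simp
  note WG = sb_WGC[OF Gf_carrier Cb_carrier[OF Gb] W]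
  have Wuw: "sb W (nv+nd) nu 0 nw = 0\<^sub>m nu nw"
    using WG[of "nv+nd" nu 0 nw] eq2[symmetric] Cb dm Gblk by simp
  have Wuz: "sb W (nv+nd) nu nw nz = 0\<^sub>m nu nz"
    using WG[of "nv+nd" nu nw nz] eq2[symmetric] Cb dm Gblk by simp
  have Q2: "Q = K + Q * (Gyu * K)"
    using WG[of "nv+nd" nu "nw+nz" ny] eq2[symmetric] Cb dm Gblk Wuw Wuz Qc unfolding Q_def by (simp add: mdist)
  show ?thesis using that[OF Qc sQ Q1 Q2] .
qed

end


lemma Fract_zero_num: "Fract (0::'a::idom) q = 0"
  unfolding Zero_fract_def by (rule eq_fract(3))

lemma proper_0: "proper_rf 0"
  unfolding proper_rf_def by (intro exI[of _ 0] exI[of _ 1]) (simp add: Zero_fract_def)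

context rsys begin

lemma delta_zero:
  assumes retro: "\<forall>Gbar \<in> carrier_mat nv nw. proper_tfm Gbar \<longrightarrow> int_stable Gbar Gwv \<longrightarrow> int_stable Gf (Cb Gbar)"
    and Q: "Q \<in> carrier_mat nu ny" and sQ: "RHinf Q" and Q1: "Q = K + K * (Gyu * Q)" and Q2: "Q = K + Q * (Gyu * K)"
  shows "Gwu * Q * Gyv = 0\<^sub>m nw nv"
proof (rule eq_matI)
  note dm = dims K_dim
  let ?D = "Gwu * Q * Gyv"
  have Dc: "?D \<in> carrier_mat nw nv" using Q dm by auto
  have sD: "RHinf ?D" using Q dm sQ RH_blocks
    by (intro RHinf_mult[of _ nw ny _ nv] RHinf_mult[of _ nw nu _ ny]) auto
  fix i j assume "i < dim_row (0\<^sub>m nw nv :: tfm)" "j < dim_col (0\<^sub>m nw nv :: tfm)"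
  hence ij: "i < nw" "j < nv" by auto
  show "?D $$ (i,j) = 0\<^sub>m nw nv $$ (i,j)"
  proof (rule ccontr)
    define f where "f = ?D $$ (i,j)"
    assume "?D $$ (i,j) \<noteq> 0\<^sub>m nw nv $$ (i,j)"
    hence fnz: "f \<noteq> 0" unfolding f_def using ij by simp
    have sf: "stable_rf f" unfolding f_def by (rule sD[unfolded RHinf_def, rule_format]) (use Dc ij in auto)
    obtain pf qf where qf: "hurw qf" and fF: "f = Fract pf qf" using sf unfolding stable_iff by blast
    have pfnz: "pf \<noteq> 0" using fnz fF Fract_zero_num by auto
    define g where "g = Gwv $$ (i,j)"
    have sg: "stable_rf g" unfolding g_def using RH_blocks dm ij unfolding RHinf_def by auto
    obtain pg qg where qg: "hurw qg" and gF: "g = Fract pg qg" and dg: "degree pg \<le> degree qg"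
      using sg unfolding stable_iff by blast
    have qgnz: "qg \<noteq> 0" using hurw_nz[OF qg] .
    obtain s0 where s0: "s0 > 0" "poly pf s0 \<noteq> 0" using exists_pos_nonroot[OF pfnz] by blast
    have qfs: "poly qf s0 \<noteq> 0" using hurw_eval[OF qf] s0 by simp
    define k where "k = (s0 + 1) * poly qf s0 / poly pf s0"
    have knz: "k \<noteq> 0" unfolding k_def using s0 qfs by simp
    define r :: rfun where "r = Fract [:k:] [:1,1:]"
    have sr: "stable_rf r" unfolding stable_iff r_def using hurw_s1 by (intro exI[of _ "[:k:]"] exI[of _ "[:1,1:]"]) simp
    define Dd where "Dd = [:1,1:] * qg + [:k:] * pg"
    have degD: "degree Dd = degree qg + 1"
    proof -
      have d0: "degree [:1,1::real:] = 1" by simp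
      have nz1: "[:1,1::real:] \<noteq> 0" by simp
      have "degree ([:1,1:] * qg) = degree [:1,1::real:] + degree qg" using nz1 qgnz by (rule degree_mult_eq)
      then have d1: "degree ([:1,1:] * qg) = degree qg + 1" by (metis d0 add.commute)
      have "degree ([:k:] * pg) \<le> degree pg" using degree_mult_le[of "[:k:]" pg] by simp
      hence "degree ([:k:] * pg) < degree ([:1,1:] * qg)" using d1 dg by linarith
      then show ?thesis unfolding Dd_def using d1 by (simp add: degree_add_eq_left)
    qed
    have Dnz: "Dd \<noteq> 0" using degD by auto
    define h :: rfun where "h = Fract ([:k:] * qg) Dd"
    have ph: "proper_rf h" unfolding proper_rf_def h_def
      using Dnz degD degree_mult_le[of "[:k:]" qg]
      by (intro exI[of _ "[:k:] * qg"] exI[of _ Dd]) auto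
    have Enz: "[:1,1::real:] * qg \<noteq> 0" using qgnz by (simp only: mult_eq_0_iff pCons_eq_0_iff) simp
    have rg: "1 + r * g = Fract Dd ([:1,1:] * qg)"
    proof -
      have "r * g = Fract ([:k:] * pg) ([:1,1:] * qg)" unfolding r_def gF by (simp only: mult_fract)
      then have "1 + r * g = Fract 1 1 + Fract ([:k:] * pg) ([:1,1:] * qg)" by (simp only: One_fract_def)
      also have "\<dots> = Fract (1 * ([:1,1:] * qg) + [:k:] * pg * 1) (1 * ([:1,1:] * qg))"
        using Enz by (intro add_fract) auto
      also have "\<dots> = Fract Dd ([:1,1:] * qg)" unfolding Dd_def by (simp only: mult_1_left mult_1_right)
      finally show ?thesis .
    qed
    have hr: "h * (1 + r * g) = r"
    proof -
      have "h * (1 + r * g) = Fract ([:k:] * qg * Dd) (Dd * ([:1,1:] * qg))" unfolding rg h_def by (simp only: mult_fract)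
      also have "\<dots> = Fract [:k:] [:1,1:]"
      proof -
        have nz1: "[:1,1::real:] \<noteq> 0" by simp
        have nz2: "Dd * ([:1,1:] * qg) \<noteq> 0" using Dnz Enz by (simp only: mult_eq_0_iff) blast
        have "[:k:] * qg * Dd * [:1,1:] = [:k:] * (Dd * ([:1,1:] * qg))" by (simp only: ac_simps)
        then show ?thesis by (simp only: eq_fract(1)[OF nz2 nz1])
      qed
      finally show ?thesis unfolding r_def .
    qed
    define Gbar where "Gbar = Em nv nw j i h"
    define Wp where "Wp = Em nv nw j i r"
    have Gb: "Gbar \<in> carrier_mat nv nw" unfolding Gbar_def by simp
    have pG: "proper_tfm Gbar" unfolding proper_tfm_def Gbar_def using ph proper_0 by auto
    have sWp: "RHinf Wp" unfolding RHinf_def Wp_def using sr stable_0 by auto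
    have eqWp: "Wp = Gbar + Gbar * Gwv * Wp"
    proof -
      have "Gbar * Gwv * Wp = Em nv nw j i (h * g * r)" unfolding Gbar_def Wp_def g_def
        using Em_mult[OF _ ij(2,1)] dm by auto
      then have "Gbar + Gbar * Gwv * Wp = Em nv nw j i (h + h * g * r)" unfolding Gbar_def by (simp add: Em_add)
      also have "h + h * g * r = r" using hr by (simp add: algebra_simps)
      finally show ?thesis unfolding Wp_def by simp
    qed
    have adm: "int_stable Gbar Gwv"
      by (rule int_stable_W2[OF Gb _ _ _ sWp eqWp]) (use dm RH_blocks Wp_def in auto)
    have st: "int_stable Gf (Cb Gbar)" using retro Gb pG adm by blast
    obtain W where W: "W \<in> carrier_mat (nv+nd+nu) (nw+nz+ny)" and sW: "RHinf W"
      and eq1: "W = Cb Gbar + Cb Gbar * Gf * W"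
      using int_stable_E1[OF Gf_carrier st] by metis
    have eq1': "W = Cb Gbar + Cb Gbar * (Gf * W)" using eq1 W Gf_carrier Cb_carrier[OF Gb] by simp
    note CG = CGW_blk[OF Gb W]
    note Cb = Cblk[OF Gb]
    define X where "X = sb W 0 nv 0 nw"
    define Y where "Y = sb W (nv+nd) nu 0 nw"
    have Xc: "X \<in> carrier_mat nv nw" and Yc: "Y \<in> carrier_mat nu nw" unfolding X_def Y_def by auto
    have Z: "sb W nv nd 0 nw = 0\<^sub>m nd nw" using CG(2)[of 0 nw] eq1'[symmetric] Cb by simp
    have Yeq: "Y = K * (Gyv * X) + K * (Gyu * Y)"
      using CG(3)[of 0 nw] eq1'[symmetric] Cb Z dm unfolding X_def Y_def by (simp add: mdist)
    have Xeq: "X = Gbar + Gbar * (Gwv * X + Gwu * Y)"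
      using CG(1)[of 0 nw] eq1'[symmetric] Cb Z dm Gb unfolding X_def Y_def by simp
    note IF = inv_facts[OF Q Q1 Q2]
    have YQ: "Y = Q * (Gyv * X)"
    proof -
      have "Y = ((1\<^sub>m nu + Q * Gyu) * (1\<^sub>m nu + - (K * Gyu))) * Y" unfolding IF(2) using Yc by simp
      also have "\<dots> = (1\<^sub>m nu + Q * Gyu) * ((1\<^sub>m nu + - (K * Gyu)) * Y)" using Yc Q dm by (intro mass) auto
      also have "(1\<^sub>m nu + - (K * Gyu)) * Y = Y + - (K * (Gyu * Y))" using Yc Q dm by (simp add: mdist; (intro eq_matI; auto)?)
      also have "\<dots> = K * (Gyv * X)" using sum_eq_sub[OF Yc _ _ Yeq] Xc Yc dm by simp
      also have "(1\<^sub>m nu + Q * Gyu) * (K * (Gyv * X)) = (K + Q * (Gyu * K)) * (Gyv * X)"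
        using Xc Q dm by (simp add: mdist; (intro eq_matI; auto)?)
      also have "\<dots> = Q * (Gyv * X)" unfolding Q2[symmetric] ..
      finally show ?thesis .
    qed
    define T where "T = Gwv * X + ?D * X"
    have Tc: "T \<in> carrier_mat nw nw" unfolding T_def using Xc Dc dm by auto
    have XT: "X = Gbar + Gbar * T"
    proof -
      have "Gwu * Y = ?D * X" unfolding YQ using Xc Q dm by (simp add: mdist)
      then show ?thesis using Xeq unfolding T_def by simp
    qed
    have GT: "Gbar * T = mat nv nw (\<lambda>(a,c). if a = j then h * T $$ (i,c) else 0)"
      unfolding Gbar_def using Em_mult_left[OF Tc ij(2,1)] .
    have Xent: "X $$ (a,b) = (if a = j \<and> b = i then h else 0) + (if a = j then h * T $$ (i,b) else 0)"
      if "a < nv" "b < nw" for a b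
      using arg_cong[OF XT[unfolded GT], of "\<lambda>M. M $$ (a,b)"] that unfolding Gbar_def by simp
    define x where "x = X $$ (j,i)"
    have X0: "X $$ (a,i) = (if a = j then x else 0)" if "a < nv" for a
      using Xent[OF that ij(1)] unfolding x_def by (auto simp: Xent[OF ij(2,1)])
    have Tii: "T $$ (i,i) = g * x + f * x"
    proof -
      have "(Gwv * X) $$ (i,i) = (\<Sum>d<nv. Gwv $$ (i,d) * X $$ (d,i))" using dm Xc ij by (intro mult_entry) auto
      also have "\<dots> = (\<Sum>d<nv. if d = j then Gwv $$ (i,j) * x else 0)" by (intro sum.cong) (auto simp: X0)
      also have "\<dots> = g * x" using ij unfolding g_def by simp
      finally have a: "(Gwv * X) $$ (i,i) = g * x" .
      have "(?D * X) $$ (i,i) = (\<Sum>d<nv. ?D $$ (i,d) * X $$ (d,i))" using Dc Xc ij by (intro mult_entry) auto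
      also have "\<dots> = (\<Sum>d<nv. if d = j then ?D $$ (i,j) * x else 0)" by (intro sum.cong) (auto simp: X0)
      also have "\<dots> = f * x" using ij unfolding f_def by simp
      finally have b: "(?D * X) $$ (i,i) = f * x" .
      show ?thesis unfolding T_def using a b ij Xc Dc dm by simp
    qed
    have xeq: "x = h + h * (g * x + f * x)" unfolding x_def using Xent[OF ij(2,1)] Tii by (simp add: x_def)
    have "x * (1 + r * g) = (h + h * (g * x + f * x)) * (1 + r * g)" using arg_cong[OF xeq, of "\<lambda>t. t * (1 + r * g)"] .
    also have "\<dots> = h * (1 + r * g) + h * (1 + r * g) * (g * x + f * x)" by (simp add: algebra_simps)
    also have "\<dots> = r + r * (g * x + f * x)" unfolding hr ..
    finally have "x * (1 + r * g) = r + r * (g * x + f * x)" .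
    hence xr: "x = r + r * f * x" by (simp add: algebra_simps)
    have sx: "stable_rf x" unfolding x_def using RHinf_sb[OF sW W, of 0 nv 0 nw] ij unfolding X_def RHinf_def by auto
    have ox: "okq s0 x" and orr: "okq s0 r" and of: "okq s0 f" using stable_okq sx sr sf s0 by auto
    have o1: "okq s0 (r * f) \<and> evq s0 (r * f) = evq s0 r * evq s0 f" using okq_mult[OF orr of] .
    have o2: "okq s0 (r * f * x) \<and> evq s0 (r * f * x) = evq s0 (r * f) * evq s0 x" using okq_mult[OF o1[THEN conjunct1] ox] .
    have o3: "evq s0 (r + r * f * x) = evq s0 r + evq s0 (r * f * x)" using okq_add[OF orr o2[THEN conjunct1]] by blast
    have evr: "evq s0 r = k / (s0 + 1)" unfolding r_def using s0 by (subst evq_Fract) (auto simp: add_pos_pos)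
    have evf: "evq s0 f = poly pf s0 / poly qf s0" unfolding fF using qfs by (simp add: evq_Fract)
    have s1: "s0 + 1 \<noteq> 0" using s0 by simp
    have kk: "k / (s0 + 1) = poly qf s0 / poly pf s0" unfolding k_def using s1 by simp
    have "evq s0 r * evq s0 f = 1" unfolding evr evf kk using s0 qfs by simp
    hence "evq s0 x = evq s0 r + evq s0 x" using o1 o2 o3 xr by (metis mult_1)
    hence "evq s0 r = 0" by simp
    thus False using evr knz s0 by simp
  qed
qed (use dims in auto)

end


theorem theorem1:
  fixes nw nz ny nv nd nu :: nat
    and Gwv Gwd Gwu Gzv Gzd Gzu Gyv Gyd Gyu K :: tfm
  assumes dims: "Gwv \<in> carrier_mat nw nv" "Gwd \<in> carrier_mat nw nd" "Gwu \<in> carrier_mat nw nu"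
    "Gzv \<in> carrier_mat nz nv" "Gzd \<in> carrier_mat nz nd" "Gzu \<in> carrier_mat nz nu"
    "Gyv \<in> carrier_mat ny nv" "Gyd \<in> carrier_mat ny nd" "Gyu \<in> carrier_mat ny nu"
    and G_stable: "RHinf (blk3 Gwv Gwd Gwu Gzv Gzd Gzu Gyv Gyd Gyu)"
    and K_dim: "K \<in> carrier_mat nu ny"
    and K_proper: "proper_tfm K"
  shows "(\<forall>Gbar \<in> carrier_mat nv nw. proper_tfm Gbar \<longrightarrow> int_stable Gbar Gwv \<longrightarrow>
            int_stable (blk3 Gwv Gwd Gwu Gzv Gzd Gzu Gyv Gyd Gyu)
                       (blk3 Gbar (0\<^sub>m nv nz) (0\<^sub>m nv ny)
                             (0\<^sub>m nd nw) (0\<^sub>m nd nz) (0\<^sub>m nd ny)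
                             (0\<^sub>m nu nw) (0\<^sub>m nu nz) K))
     \<longleftrightarrow>
     (\<exists>Q \<in> carrier_mat nu ny. RHinf Q \<and>
        mat_inverse (1\<^sub>m nu + Q * Gyu) \<noteq> None \<and>
        K = the (mat_inverse (1\<^sub>m nu + Q * Gyu)) * Q \<and>
        Gwu * Q * Gyv = 0\<^sub>m nw nv)"
proof -
  interpret rsys nw nz ny nv nd nu Gwv Gwd Gwu Gzv Gzd Gzu Gyv Gyd Gyu K
    by unfold_locales (use dims G_stable K_dim in auto)
  show ?thesis
  proof
    assume retro: "\<forall>Gbar \<in> carrier_mat nv nw. proper_tfm Gbar \<longrightarrow> int_stable Gbar Gwv \<longrightarrow> int_stable Gf (Cb Gbar)"
    have adm0: "int_stable (0\<^sub>m nv nw) Gwv"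
      by (rule int_stable_W2[of "0\<^sub>m nv nw" nv nw Gwv "0\<^sub>m nv nw"]) (use dims RH_blocks RHinf_zero in auto)
    have p0: "proper_tfm (0\<^sub>m nv nw)" using proper_0 by (simp add: proper_tfm_def)
    have st0: "int_stable Gf (Cb (0\<^sub>m nv nw))" using retro adm0 p0 by auto
    obtain Q where Q: "Q \<in> carrier_mat nu ny" and sQ: "RHinf Q" and Q1: "Q = K + K * (Gyu * Q)"
      and Q2: "Q = K + Q * (Gyu * K)" using partA[OF st0] by blast
    note IF = inv_facts[OF Q Q1 Q2]
    have Ac: "1\<^sub>m nu + Q * Gyu \<in> carrier_mat nu nu" using Q dims by auto
    have Mc: "1\<^sub>m nu + - (K * Gyu) \<in> carrier_mat nu nu" using K_dim dims by auto
    have inv: "mat_inverse (1\<^sub>m nu + Q * Gyu) \<noteq> None"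
    proof
      assume "mat_inverse (1\<^sub>m nu + Q * Gyu) = None"
      from mat_inverse(1)[OF Ac this, of "()"]
      have "1\<^sub>m nu + Q * Gyu \<notin> Units (ring_mat TYPE(rfun) nu ())" .
      moreover have "1\<^sub>m nu + Q * Gyu \<in> Units (ring_mat TYPE(rfun) nu ())"
        unfolding Units_def ring_mat_def using IF Ac Mc by auto
      ultimately show False by blast
    qed
    then obtain Mi where Mi: "mat_inverse (1\<^sub>m nu + Q * Gyu) = Some Mi" by auto
    from mat_inverse(2)[OF Ac Mi] have M1: "Mi * (1\<^sub>m nu + Q * Gyu) = 1\<^sub>m nu" and Mic: "Mi \<in> carrier_mat nu nu" by auto
    have "Mi = Mi * ((1\<^sub>m nu + Q * Gyu) * (1\<^sub>m nu + - (K * Gyu)))" unfolding IF(2) using Mic by simp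
    also have "\<dots> = (Mi * (1\<^sub>m nu + Q * Gyu)) * (1\<^sub>m nu + - (K * Gyu))" using Mic Ac Mc K_dim dims by (intro mass[symmetric]) auto
    also have "\<dots> = 1\<^sub>m nu + - (K * Gyu)" unfolding M1 using Mc K_dim dims by simp
    finally have MiE: "Mi = 1\<^sub>m nu + - (K * Gyu)" .
    have KE: "K = the (mat_inverse (1\<^sub>m nu + Q * Gyu)) * Q" unfolding Mi MiE using IF(3) by simp
    have D: "Gwu * Q * Gyv = 0\<^sub>m nw nv" using delta_zero[OF retro Q sQ Q1 Q2] .
    show "\<exists>Q \<in> carrier_mat nu ny. RHinf Q \<and> mat_inverse (1\<^sub>m nu + Q * Gyu) \<noteq> None \<and>
        K = the (mat_inverse (1\<^sub>m nu + Q * Gyu)) * Q \<and> Gwu * Q * Gyv = 0\<^sub>m nw nv"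
      using Q sQ inv KE D by blast
  next
    assume "\<exists>Q \<in> carrier_mat nu ny. RHinf Q \<and> mat_inverse (1\<^sub>m nu + Q * Gyu) \<noteq> None \<and>
        K = the (mat_inverse (1\<^sub>m nu + Q * Gyu)) * Q \<and> Gwu * Q * Gyv = 0\<^sub>m nw nv"
    then obtain Q where Q: "Q \<in> carrier_mat nu ny" "RHinf Q" "mat_inverse (1\<^sub>m nu + Q * Gyu) \<noteq> None"
        "K = the (mat_inverse (1\<^sub>m nu + Q * Gyu)) * Q" "Gwu * Q * Gyv = 0\<^sub>m nw nv" by blast
    show "\<forall>Gbar \<in> carrier_mat nv nw. proper_tfm Gbar \<longrightarrow> int_stable Gbar Gwv \<longrightarrow> int_stable Gf (Cb Gbar)"
      using if_dir[OF Q] by blast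
  qed
qed



end
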